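(* If $\mathsf{B}\in\mathbb{R}$ and $\alpha<\rho(\mathsf{B})$ is an ordinal, then there is an $\mathsf{A}\in\mathbb{R}$ such that $\mathsf{A}\le\mathsf{B}$ and $\rho(\mathsf{A})=\alpha$.
   Context: Standard generating sets: $\mathrm{Homeo}_+(I)$ acts on $I=[0,1]$ on the right. Support $\mathrm{supt}(f)=\{t:tf\ne t\}$; extended support = interior of its closure; orbitals = components of the support, endpoints = transition points; a bump has exactly one orbital, positive if $tf>t$ there, else negative. A marking assigns to each bump $b$ with support $(u,v)$ a point $s_b\in(u,v)$; feet of $b$: $(u,s_b)$ and $[t_b,v)$ with $t_b=s_bb$ ($b$ positive) or $s_bb^{-1}$ ($b$ negative). A marked function has finitely many bumps, each marked. A finite set of marked functions is fast if no bump occurs in two of its elements and distinct bumps have disjoint feet. A standard function is a marked function whose extended support is an interval, with all positive bumps right of all negative bumps, and #positive $-$ #negative bumps $\in\{0,1\}$. For standard $f,g$: $f\ll g$ iff extended supports disjoint with $f$'s to the left; $f\sqsubset g$ iff closure of extended support of $f$ lies in extended support of $g$; $f<g$ iff $f\ll g$ or $f\sqsubset g$. $f^\circ$: if $f$ has $>2$ orbitals, $f$ restricted to the union of its non-extreme orbitals; if $f$ has 1 or 2 orbitals and the left foot of its positive bump is $(r,s)$, a positive bump with support $(r,s)$. $(f,g)$ is a standard pair if $\{f,g\}$ is fast and either $f\ll g$ or ($f\sqsubset g$ and $(g^\circ,f)$ is a standard pair). $\mathcal{S}$ = finite sets of standard functions, pairwise $<$-comparable, each pair $f<g$ a standard pair.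 Oscillation $o(f,g)$ for $f<g$: number of orbitals of $g$ containing a transition point of $f$. Signatures: the signature of $A\in\mathcal S$ is $(f,g)\mapsto o(f,g)$ on pairs $f<g$; functions on pairs of finite linear orders are equivalent if an order-preserving bijection of bases carries one to the other; $\mathbb{S}$ = signatures of members of $\mathcal S$ up to equivalence. $\mathsf{0},\mathsf{1}$: base sizes $0,1$. $\mathsf{A}+\mathsf{B}$: base $A$ followed by $B$, agreeing with $\mathsf{A},\mathsf{B}$ on their bases, value $0$ across. $\exp(\mathsf{A})$: same base, values $\mathsf{A}(i,j)+1$. Inflation: for $\mathsf{A}$ with base $A$ and $m\in A$, $\mathsf{A}^m$ has base $A\cup\{i^m:i<m,\ \mathsf{A}(i,m)>0\}$, new elements placed above all elements of $A$ below $m$ and below $m$, $i^m<j^m$ iff $i<j$; for $i,j<m\le k$ (with $\mathsf{A}(m,m)=\infty$): $\mathsf{A}^m(i^m,j^m)=\mathsf{A}(i,j)$, $\mathsf{A}^m(i,j^m)=\min(\mathsf{A}(j,m)-1,\mathsf{A}(i,m))$, $\mathsf{A}^m(i^m,k)=\min(\mathsf{A}(i,m),\mathsf{A}(m,k))$, other values as in $\mathsf{A}$. $\mathsf{A}\le\mathsf{B}$ iff there is a sequence $\mathsf{B}_0=\mathsf{B},\dots,\mathsf{B}_n=\mathsf{A}$ with each $\mathsf{B}_{i+1}$ (equivalent to) a restriction to a subset of the base of an inflation of $\mathsf{B}_i$. $\mathbb{B}$: smallest class containing $\mathsf{0},\mathsf{1}$ with $\sum_{i<n}\exp(\mathsf{X}_i)\in\mathbb{B}$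 whenever all $\mathsf{X}_i\in\mathbb{B}$; each nonzero member is uniquely $\sum_{i<n}\exp(\mathsf{A}_i)$ with nonzero $\mathsf{A}_i\in\mathbb{B}$. $\rho(\mathsf{0})=0$, $\rho(\mathsf{1})=1$, $\rho(\exp(\mathsf{A}))=\omega^{-1+\rho(\mathsf{A})}$, $\rho(\sum_{i<n}\exp(\mathsf{A}_i))=\sum_{i<n}\rho(\exp(\mathsf{A}_i))$ (ordinal sum), where $-1+\alpha=\beta$ if $\alpha=1+\beta$ and $\omega^{-1+0}:=0$. $\mathbb{R}$: smallest subclass of $\mathbb{B}$ containing $\mathsf{0},\mathsf{1}$ with $\sum_{i<n}\exp(\mathsf{X}_i)\in\mathbb{R}$ whenever all $\mathsf{X}_i\in\mathbb{R}$ and $\rho(\mathsf{X}_{i+1})\le\rho(\mathsf{X}_i)$ for $i<n-1$. *)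

theory Defs
  imports Main
begin

text \<open>C [e1,...,ek] denotes omega^e1 + ... + omega^ek; it is in normal form
  (ord_valid) iff e1 >= ... >= ek and all ei are in normal form.
  All ordinals rho(A) for A in B are below epsilon_0.\<close>

datatype cnf = C "cnf list"

fun ord_lt :: "cnf \<Rightarrow> cnf \<Rightarrow> bool" where
  "ord_lt (C []) (C []) = False"
| "ord_lt (C []) (C (y # ys)) = True"
| "ord_lt (C (x # xs)) (C []) = False"
| "ord_lt (C (x # xs)) (C (y # ys)) = (ord_lt x y \<or> (x = y \<and> ord_lt (C xs) (C ys)))"

definition ord_le :: "cnf \<Rightarrow> cnf \<Rightarrow> bool" where
  "ord_le a b \<longleftrightarrow> ord_lt a b \<or> a = b"

fun ord_valid :: "cnf \<Rightarrow> bool" where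
  "ord_valid (C xs) = ((\<forall>x\<in>set xs. ord_valid x) \<and> sorted_wrt (\<lambda>a b. ord_le b a) xs)"

definition ord_zero :: cnf where "ord_zero = C []"
definition ord_one :: cnf where "ord_one = C [C []]"

fun ord_add :: "cnf \<Rightarrow> cnf \<Rightarrow> cnf" where
  "ord_add (C xs) (C []) = C xs"
| "ord_add (C xs) (C (y # ys)) = C (filter (\<lambda>x. ord_le y x) xs @ y # ys)"

definition ord_sum :: "cnf list \<Rightarrow> cnf" where
  "ord_sum as = foldl ord_add ord_zero as"

text \<open>-1 + beta: for finite beta = n >= 1 it is n - 1, for infinite beta it is beta.\<close>
definition ord_minus1 :: "cnf \<Rightarrow> cnf" where
  "ord_minus1 b = (case b of C xs \<Rightarrow>
      if xs \<noteq> [] \<and> (\<forall>x\<in>set xs. x = C []) then C (tl xs) else C xs)"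

text \<open>omega^(-1+beta), with omega^(-1+0) := 0.\<close>
definition ord_omexp :: "cnf \<Rightarrow> cnf" where
  "ord_omexp b = (if b = ord_zero then ord_zero else C [ord_minus1 b])"

text \<open>A function on pairs of a finite linear order, represented canonically
  with base {0..<n} (every finite linear order is isomorphic to such);
  only the values f i j with i < j < n are relevant.\<close>

type_synonym sig = "nat \<times> (nat \<Rightarrow> nat \<Rightarrow> nat)"

definition sig_eq :: "sig \<Rightarrow> sig \<Rightarrow> bool" where
  "sig_eq A B \<longleftrightarrow> fst A = fst B \<and> (\<forall>i j. i < j \<and> j < fst A \<longrightarrow> snd A i j = snd B i j)"

definition sig_zero :: sig where "sig_zero = (0, \<lambda>_ _. 0)"
definition sig_one :: sig where "sig_one = (1, \<lambda>_ _. 0)"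

definition sig_plus :: "sig \<Rightarrow> sig \<Rightarrow> sig" where
  "sig_plus A B = (fst A + fst B,
     \<lambda>i j. if j < fst A then snd A i j
           else if fst A \<le> i then snd B (i - fst A) (j - fst A) else 0)"

definition sig_exp :: "sig \<Rightarrow> sig" where
  "sig_exp A = (fst A, \<lambda>i j. snd A i j + 1)"

definition sig_sum :: "sig list \<Rightarrow> sig" where
  "sig_sum As = foldr sig_plus As sig_zero"

text \<open>Positions: 0..<m are the old i < m; m..<m+k are the new
  elements i^m (i ranging increasingly over those i < m with A(i,m) > 0);
  m+k..<n+k are the old elements m..<n.  Inl = old element, Inr i = i^m.\<close>

definition sig_infl :: "sig \<Rightarrow> nat \<Rightarrow> sig" where
  "sig_infl A m = (let n = fst A; f = snd A;
      Cs = filter (\<lambda>i. 0 < f i m) [0..<m]; k = length Cs;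
      pos = (\<lambda>p. if p < m then Inl p else if p < m + k then Inr (Cs ! (p - m)) else Inl (p - k));
      val = (\<lambda>x y. case (x, y) of
               (Inl i, Inl j) \<Rightarrow> f i j
             | (Inr i, Inr j) \<Rightarrow> f i j
             | (Inl i, Inr j) \<Rightarrow> min (f j m - 1) (f i m)
             | (Inr i, Inl j) \<Rightarrow> (if j = m then f i m else min (f i m) (f m j)))
    in (n + k, \<lambda>p q. val (pos p) (pos q)))"

definition sig_restr :: "sig \<Rightarrow> nat set \<Rightarrow> sig" where
  "sig_restr A T = (card T,
     \<lambda>i j. snd A (sorted_list_of_set T ! i) (sorted_list_of_set T ! j))"

definition sig_step :: "sig \<Rightarrow> sig \<Rightarrow> bool" where
  "sig_step B A \<longleftrightarrow> (\<exists>m T. m < fst B \<and> T \<subseteq> {0..<fst (sig_infl B m)}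
       \<and> sig_eq A (sig_restr (sig_infl B m) T))"

definition sig_le :: "sig \<Rightarrow> sig \<Rightarrow> bool" where
  "sig_le A B \<longleftrightarrow> sig_step\<^sup>*\<^sup>* B A"

inductive BB :: "sig \<Rightarrow> bool" where
  BB_zero: "sig_eq X sig_zero \<Longrightarrow> BB X"
| BB_one: "sig_eq X sig_one \<Longrightarrow> BB X"
| BB_sum: "(\<forall>i<length Xs. BB (Xs ! i)) \<Longrightarrow> sig_eq X (sig_sum (map sig_exp Xs)) \<Longrightarrow> BB X"

inductive rho_rel :: "sig \<Rightarrow> cnf \<Rightarrow> bool" where
  rho_zero: "sig_eq X sig_zero \<Longrightarrow> rho_rel X ord_zero"
| rho_one: "sig_eq X sig_one \<Longrightarrow> rho_rel X ord_one"
| rho_sum: "length As = length bs \<Longrightarrow>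
    (\<forall>i<length As. BB (As ! i) \<and> \<not> sig_eq (As ! i) sig_zero \<and> rho_rel (As ! i) (bs ! i)) \<Longrightarrow>
    sig_eq X (sig_sum (map sig_exp As)) \<Longrightarrow>
    rho_rel X (ord_sum (map ord_omexp bs))"

definition rho :: "sig \<Rightarrow> cnf" where
  "rho X = (THE a. rho_rel X a)"

inductive RR :: "sig \<Rightarrow> bool" where
  RR_zero: "sig_eq X sig_zero \<Longrightarrow> RR X"
| RR_one: "sig_eq X sig_one \<Longrightarrow> RR X"
| RR_sum: "(\<forall>i<length Xs. RR (Xs ! i)) \<Longrightarrow>
    (\<forall>i. Suc i < length Xs \<longrightarrow> ord_le (rho (Xs ! Suc i)) (rho (Xs ! i))) \<Longrightarrow>
    sig_eq X (sig_sum (map sig_exp Xs)) \<Longrightarrow> RR X"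

end

theory Submission
  imports Defs
begin

lemma sig_eq_refl[simp]: "sig_eq A A" by (simp add: sig_eq_def)
lemma sig_eq_sym: "sig_eq A B \<Longrightarrow> sig_eq B A" by (simp add: sig_eq_def)
lemma sig_eq_trans[trans]: "sig_eq A B \<Longrightarrow> sig_eq B D \<Longrightarrow> sig_eq A D" by (simp add: sig_eq_def)
lemma sig_eq_fst: "sig_eq A B \<Longrightarrow> fst A = fst B" by (simp add: sig_eq_def)

lemma Cs_sorted: "sorted_wrt (<) (filter P [0..<m::nat])"
  by (simp add: sorted_wrt_filter)
lemma Cs_less: "a < length (filter P [0..<m::nat]) \<Longrightarrow> filter P [0..<m] ! a < m"
  using nth_mem by fastforce
lemma Cs_mono: "a < b \<Longrightarrow> b < length (filter P [0..<m::nat]) \<Longrightarrow> filter P [0..<m] ! a < filter P [0..<m] ! b"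
  using Cs_sorted sorted_wrt_nth_less by blast

definition iCs :: "(nat \<Rightarrow> nat \<Rightarrow> nat) \<Rightarrow> nat \<Rightarrow> nat list" where
  "iCs f m = filter (\<lambda>i. 0 < f i m) [0..<m]"
definition ipos :: "nat \<Rightarrow> nat list \<Rightarrow> nat \<Rightarrow> nat + nat" where
  "ipos m Cs p = (if p < m then Inl p else if p < m + length Cs then Inr (Cs ! (p - m)) else Inl (p - length Cs))"
definition ival :: "(nat \<Rightarrow> nat \<Rightarrow> nat) \<Rightarrow> nat \<Rightarrow> nat + nat \<Rightarrow> nat + nat \<Rightarrow> nat" where
  "ival f m x y = (case (x, y) of
               (Inl i, Inl j) \<Rightarrow> f i j
             | (Inr i, Inr j) \<Rightarrow> f i j
             | (Inl i, Inr j) \<Rightarrow> min (f j m - 1) (f i m)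
             | (Inr i, Inl j) \<Rightarrow> (if j = m then f i m else min (f i m) (f m j)))"

lemma sig_infl_alt: "sig_infl (n,f) m = (n + length (iCs f m),
   \<lambda>p q. ival f m (ipos m (iCs f m) p) (ipos m (iCs f m) q))"
  by (simp add: sig_infl_def Let_def iCs_def ipos_def ival_def)

lemma ival_simps[simp]:
  "ival f m (Inl i) (Inl j) = f i j"
  "ival f m (Inr i) (Inr j) = f i j"
  "ival f m (Inl i) (Inr j) = min (f j m - 1) (f i m)"
  "ival f m (Inr i) (Inl j) = (if j = m then f i m else min (f i m) (f m j))"
  by (simp_all add: ival_def)

lemma infl_cong:
  assumes e: "sig_eq B B'" and m: "m < fst B"
  shows "sig_eq (sig_infl B m) (sig_infl B' m)"
proof -
  obtain n f where B: "B = (n,f)" by (cases B)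
  obtain n' g where B': "B' = (n',g)" by (cases B')
  have nn: "n' = n" using e B B' by (simp add: sig_eq_def)
  have fg: "\<And>i j. i < j \<Longrightarrow> j < n \<Longrightarrow> f i j = g i j" using e B B' by (simp add: sig_eq_def)
  have mn: "m < n" using m B by simp
  define Cs where "Cs = iCs f m"
  have CsE: "iCs g m = Cs" unfolding Cs_def iCs_def
    by (rule filter_cong) (use fg mn in auto)
  have cl: "\<And>a. a < length Cs \<Longrightarrow> Cs ! a < m" unfolding Cs_def iCs_def by (rule Cs_less)
  have cm: "\<And>a b. a < b \<Longrightarrow> b < length Cs \<Longrightarrow> Cs ! a < Cs ! b" unfolding Cs_def iCs_def by (rule Cs_mono)
  have cln: "\<And>a. a < length Cs \<Longrightarrow> Cs ! a < n" using cl mn less_trans by blast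
  show ?thesis
    unfolding B B' nn sig_infl_alt CsE sig_eq_def Cs_def[symmetric]
  proof (intro conjI allI impI, simp)
    fix p q assume pq: "p < q \<and> q < fst (n + length Cs, \<lambda>p q. ival f m (ipos m Cs p) (ipos m Cs q))"
    then have pq1: "p < q" and pq2: "q < n + length Cs" by auto
    show "snd (n + length Cs, \<lambda>p q. ival f m (ipos m Cs p) (ipos m Cs q)) p q =
         snd (n + length Cs, \<lambda>p q. ival g m (ipos m Cs p) (ipos m Cs q)) p q"
      using pq1 pq2 cl[of "p-m"] cl[of "q-m"] cm[of "p-m" "q-m"] mn cln[of "q-m"]
      by (auto simp: ipos_def fg intro!: fg)
  qed
qed


definition restrL :: "sig \<Rightarrow> nat list \<Rightarrow> sig" where
  "restrL X L = (length L, \<lambda>i j. snd X (L ! i) (L ! j))"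

lemma sorted_list_of_set_strict: "sorted_wrt (<) (L::nat list) \<Longrightarrow> sorted_list_of_set (set L) = L"
  by (simp add: sorted_list_of_set_sort_remdups strict_sorted_iff distinct_remdups_id sorted_sort_id)

lemma restr_set: "sorted_wrt (<) L \<Longrightarrow> sig_restr X (set L) = restrL X L"
  unfolding sig_restr_def restrL_def
  by (simp add: sorted_list_of_set_strict distinct_card strict_sorted_iff)

lemma restrL_cong:
  assumes "sig_eq X X'" "sorted_wrt (<) L" "set L \<subseteq> {0..<fst X}"
  shows "sig_eq (restrL X L) (restrL X' L)"
  using assms unfolding sig_eq_def restrL_def
  by (auto simp: sorted_wrt_nth_less subset_iff)

lemma infl_zero: "sig_infl X 0 = X"
  by (cases X) (simp add: sig_infl_alt iCs_def ipos_def)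

lemma sig_step_restrL:
  assumes "m < fst B" "sorted_wrt (<) L" "set L \<subseteq> {0..<fst (sig_infl B m)}"
    "sig_eq A (restrL (sig_infl B m) L)"
  shows "sig_step B A"
  unfolding sig_step_def
  using assms by (metis restr_set)

lemma sig_step_cong:
  assumes "sig_step B A" "sig_eq B B'"
  shows "sig_step B' A"
proof -
  obtain m T where m: "m < fst B" and T: "T \<subseteq> {0..<fst (sig_infl B m)}"
    and e: "sig_eq A (sig_restr (sig_infl B m) T)"
    using assms(1) unfolding sig_step_def by blast
  define L where "L = sorted_list_of_set T"
  have fT: "finite T" using T finite_subset by blast
  have sL: "sorted_wrt (<) L" unfolding L_def by simp
  have TL: "T = set L" unfolding L_def using fT by simp
  have ie: "sig_eq (sig_infl B m) (sig_infl B' m)" by (rule infl_cong[OF assms(2) m])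
  have "sig_eq A (restrL (sig_infl B' m) L)"
    using e restrL_cong[OF ie sL] T TL restr_set[OF sL] sig_eq_trans by metis
  moreover have "set L \<subseteq> {0..<fst (sig_infl B' m)}" using T TL ie sig_eq_fst by metis
  moreover have "m < fst B'" using m assms(2) sig_eq_fst by metis
  ultimately show ?thesis using sig_step_restrL sL by blast
qed

lemma sig_le_cong0:
  "sig_step\<^sup>*\<^sup>* B A \<Longrightarrow> \<forall>B'. sig_eq B B' \<longrightarrow> (\<exists>A'. sig_eq A A' \<and> sig_step\<^sup>*\<^sup>* B' A')"
proof (induction rule: converse_rtranclp_induct)
  case base
  then show ?case by blast
next
  case (step y z)
  show ?case
  proof (intro allI impI)
    fix B' assume "sig_eq y B'"
    then have "sig_step B' z" using step(1) sig_step_cong by blast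
    then have "sig_step\<^sup>*\<^sup>* B' A" using step(2) by (meson converse_rtranclp_into_rtranclp)
    then show "\<exists>A'. sig_eq A A' \<and> sig_step\<^sup>*\<^sup>* B' A'" by (intro exI[of _ A]) simp
  qed
qed

lemma sig_le_cong:
  assumes "sig_le A B" "sig_eq B B'"
  shows "\<exists>A'. sig_eq A A' \<and> sig_le A' B'"
  using sig_le_cong0 assms unfolding sig_le_def by blast

definition LE :: "sig \<Rightarrow> sig \<Rightarrow> bool" where
  "LE A B \<longleftrightarrow> (\<exists>A'. sig_eq A A' \<and> sig_le A' B)"

lemma LE_refl[simp]: "LE A A" unfolding LE_def sig_le_def by (intro exI[of _ A]) simp

lemma LE_eq: "sig_eq A B \<Longrightarrow> LE A B" unfolding LE_def sig_le_def by (intro exI[of _ B]) simp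

lemma LE_trans[trans]: "LE A B \<Longrightarrow> LE B D \<Longrightarrow> LE A D"
proof -
  assume "LE A B" "LE B D"
  then obtain A1 B1 where a: "sig_eq A A1" "sig_le A1 B" and b: "sig_eq B B1" "sig_le B1 D"
    unfolding LE_def by blast
  obtain A2 where "sig_eq A1 A2" "sig_le A2 B1" using sig_le_cong[OF a(2) b(1)] by blast
  then show "LE A D" unfolding LE_def sig_le_def
    using a(1) b(2)[unfolded sig_le_def] sig_eq_trans by (meson rtranclp_trans)
qed

lemma LE_eq_trans[trans]: "sig_eq A B \<Longrightarrow> LE B D \<Longrightarrow> LE A D"
  using LE_eq LE_trans by blast
lemma LE_trans_eq[trans]: "LE A B \<Longrightarrow> sig_eq B D \<Longrightarrow> LE A D"
  using LE_eq LE_trans by blast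

lemma LE_step: "sig_step B A \<Longrightarrow> LE A B"
  unfolding LE_def sig_le_def by (intro exI[of _ A]) auto

lemma LE_infl: "m < fst X \<Longrightarrow> LE (sig_infl X m) X"
proof -
  assume m: "m < fst X"
  let ?L = "[0..<fst (sig_infl X m)]"
  have "sig_eq (sig_infl X m) (restrL (sig_infl X m) ?L)"
    by (simp add: restrL_def sig_eq_def)
  then show ?thesis using m
    by (intro LE_step sig_step_restrL[of m X ?L]) (auto simp: sorted_wrt_upt)
qed

lemma LE_restrL:
  assumes "sorted_wrt (<) L" "set L \<subseteq> {0..<fst X}"
  shows "LE (restrL X L) X"
proof (cases "fst X = 0")
  case True
  then have "L = []" using assms(2) by auto
  then show ?thesis using True by (intro LE_eq) (simp add: sig_eq_def restrL_def)
next
  case False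
  then show ?thesis using assms
    by (intro LE_step sig_step_restrL[of 0 X L]) (auto simp: infl_zero)
qed

lemma LE_final: "LE A B \<Longrightarrow> 0 < fst B \<Longrightarrow> sig_le A B"
proof -
  assume "LE A B" and pos: "0 < fst B"
  then obtain A1 where e: "sig_eq A A1" and l: "sig_le A1 B" unfolding LE_def by blast
  from l[unfolded sig_le_def] show ?thesis
  proof (cases rule: rtranclp.cases)
    case rtrancl_refl
    have "sig_eq B (restrL (sig_infl B 0) [0..<fst B])" by (simp add: infl_zero restrL_def sig_eq_def)
    then have "sig_step B A" using e rtrancl_refl pos
      by (intro sig_step_restrL[of 0 B "[0..<fst B]"]) (auto simp: sorted_wrt_upt infl_zero intro: sig_eq_trans)
    then show ?thesis unfolding sig_le_def by auto
  next
    case (rtrancl_into_rtrancl b)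
    then have "sig_step b A" unfolding sig_step_def using e sig_eq_trans by blast
    then show ?thesis using rtrancl_into_rtrancl unfolding sig_le_def by auto
  qed
qed

definition pre :: "nat \<Rightarrow> sig \<Rightarrow> sig" where "pre k X = (k, snd X)"

lemma LE_pre: "k \<le> fst X \<Longrightarrow> LE (pre k X) X"
proof -
  assume "k \<le> fst X"
  moreover have "sig_eq (pre k X) (restrL X [0..<k])" by (simp add: restrL_def pre_def sig_eq_def)
  ultimately show ?thesis using LE_restrL[of "[0..<k]" X] LE_eq_trans by (auto simp: sorted_wrt_upt)
qed

lemma sig_eqI: "fst A = fst B \<Longrightarrow> (\<And>i j. i < j \<Longrightarrow> j < fst A \<Longrightarrow> snd A i j = snd B i j) \<Longrightarrow> sig_eq A B"
  unfolding sig_eq_def by blast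
lemma sig_eqD: "sig_eq A B \<Longrightarrow> i < j \<Longrightarrow> j < fst A \<Longrightarrow> snd A i j = snd B i j"
  unfolding sig_eq_def by blast

lemma plus_fst[simp]: "fst (sig_plus A B) = fst A + fst B" by (simp add: sig_plus_def)
lemma plus_snd: "snd (sig_plus A B) i j = (if j < fst A then snd A i j
           else if fst A \<le> i then snd B (i - fst A) (j - fst A) else 0)" by (simp add: sig_plus_def)
lemma exp_fst[simp]: "fst (sig_exp A) = fst A" by (simp add: sig_exp_def)
lemma exp_snd[simp]: "snd (sig_exp A) i j = snd A i j + 1" by (simp add: sig_exp_def)

lemma plus_cong: assumes a: "sig_eq A A'" and b: "sig_eq B B'"
  shows "sig_eq (sig_plus A B) (sig_plus A' B')"
proof (rule sig_eqI)
  show "fst (sig_plus A B) = fst (sig_plus A' B')" using a b sig_eq_fst by simp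
  fix i j assume ij: "i < j" "j < fst (sig_plus A B)"
  have fa: "fst A' = fst A" using a sig_eq_fst by metis
  show "snd (sig_plus A B) i j = snd (sig_plus A' B') i j"
  proof (cases "j < fst A")
    case True then show ?thesis using ij sig_eqD[OF a] by (simp add: plus_snd fa)
  next
    case False
    then show ?thesis using ij sig_eqD[OF b, of "i - fst A" "j - fst A"]
      by (simp add: plus_snd fa)
  qed
qed

lemma exp_cong: "sig_eq A A' \<Longrightarrow> sig_eq (sig_exp A) (sig_exp A')"
  unfolding sig_eq_def by auto

lemma plus_assoc: "sig_eq (sig_plus (sig_plus A B) D) (sig_plus A (sig_plus B D))"
  by (rule sig_eqI) (auto simp: plus_snd)

lemma plus_zero_l: "fst Z = 0 \<Longrightarrow> sig_eq (sig_plus Z B) B"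
  by (rule sig_eqI) (auto simp: plus_snd)
lemma plus_zero_r: "fst Z = 0 \<Longrightarrow> sig_eq (sig_plus A Z) A"
  by (rule sig_eqI) (auto simp: plus_snd)

lemma upt_split_map: "[0..<p + m] = [0..<p] @ map ((+) p) [0..<m]"
  by (induct m) auto

lemma iCs_plus_l:
  "iCs (snd (sig_plus P Y)) (fst P + m) = map ((+) (fst P)) (iCs (snd Y) m)"
proof -
  have e1: "filter (\<lambda>i. 0 < snd (sig_plus P Y) i (fst P + m)) [0..<fst P] = []"
    unfolding filter_empty_conv by (simp add: plus_snd)
  have e2: "filter (\<lambda>i. 0 < snd (sig_plus P Y) i (fst P + m)) (map ((+) (fst P)) [0..<m])
      = map ((+) (fst P)) (filter (\<lambda>i. 0 < snd Y i m) [0..<m])"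
    unfolding filter_map o_def by (simp add: plus_snd)
  show ?thesis unfolding iCs_def upt_split_map filter_append e1 e2 by simp
qed

lemma ipos_shift:
  "p \<le> a \<Longrightarrow> ipos (p+m) (map ((+) p) Cs) a = map_sum ((+) p) ((+) p) (ipos m Cs (a-p))"
  by (auto simp: ipos_def)

lemma ival_shift:
  assumes "\<And>i j. h (p+i) (p+j) = f i j"
  shows "ival h (p+m) (map_sum ((+) p) ((+) p) x) (map_sum ((+) p) ((+) p) y) = ival f m x y"
  by (cases x; cases y) (auto simp: assms)

lemma infl_plus_l:
  assumes m: "m < fst Y"
  shows "sig_eq (sig_infl (sig_plus P Y) (fst P + m)) (sig_plus P (sig_infl Y m))"
proof -
  obtain p g where P: "P = (p,g)" by (cases P)
  obtain n f where Y: "Y = (n,f)" by (cases Y)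
  define h where "h = snd (sig_plus P Y)"
  have sp: "sig_plus P (n,f) = (p+n, h)" unfolding h_def by (simp add: prod_eq_iff P Y)
  have hv: "\<And>i j. h i j = (if j < p then g i j else if p \<le> i then f (i - p) (j - p) else 0)"
    unfolding h_def by (simp add: plus_snd P Y)
  have hs: "\<And>i j. h (p+i) (p+j) = f i j" by (simp add: hv)
  define Cs where "Cs = iCs f m"
  have CsE: "iCs h (p + m) = map ((+) p) Cs"
    using iCs_plus_l[of P Y m] unfolding h_def Cs_def P Y by simp
  define F where "F = (\<lambda>pa q. ival h (p + m) (ipos (p + m) (map ((+) p) Cs) pa) (ipos (p + m) (map ((+) p) Cs) q))"
  define G where "G = (\<lambda>p q. ival f m (ipos m Cs p) (ipos m Cs q))"
  have key: "F a b = snd (sig_plus P (n + length Cs, G)) a b" if ab: "a < b" for a b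
  proof (cases "p \<le> a")
    case True
    then show ?thesis using ab unfolding F_def G_def
      by (simp add: ipos_shift ival_shift[of h p f, OF hs] plus_snd P)
  next
    case False
    then have "snd (sig_plus P (n + length Cs, G)) a b = (if b < p then g a b else 0)"
      by (simp add: plus_snd P)
    moreover have "ipos (p + m) (map ((+) p) Cs) a = Inl a" using False by (simp add: ipos_def)
    moreover have "h a (p+m) = 0" using False by (simp add: hv)
    moreover have "b < p \<Longrightarrow> ipos (p + m) (map ((+) p) Cs) b = Inl b" by (simp add: ipos_def)
    moreover have "\<not> b < p \<Longrightarrow> ival h (p+m) (Inl a) (ipos (p + m) (map ((+) p) Cs) b) = 0"
      using False by (auto simp: ipos_def hv)
    ultimately show ?thesis unfolding F_def by (auto simp: hv)
  qed
  show ?thesis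
    unfolding Y sp sig_infl_alt
    by (rule sig_eqI) (use key in \<open>auto simp: P CsE F_def G_def Cs_def\<close>)
qed

definition iok :: "nat \<Rightarrow> nat \<Rightarrow> nat + nat \<Rightarrow> bool" where
  "iok n m x = (case x of Inl i \<Rightarrow> i < n | Inr i \<Rightarrow> i < m)"

lemma ival_agree:
  assumes "\<And>i j. j < n \<Longrightarrow> h i j = f i j" "m < n" "iok n m x" "iok n m y"
  shows "ival h m x y = ival f m x y"
  using assms by (cases x; cases y) (auto simp: iok_def)

lemma ipos_ok:
  assumes "p < n + length Cs" "\<And>a. a < length Cs \<Longrightarrow> Cs ! a < m" "m < n"
  shows "iok n m (ipos m Cs p)"
  using assms by (auto simp: ipos_def iok_def)

lemma infl_plus_r:
  assumes m: "m < fst Y"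
  shows "sig_eq (sig_infl (sig_plus Y Q) m) (sig_plus (sig_infl Y m) Q)"
proof -
  obtain q g where Q: "Q = (q,g)" by (cases Q)
  obtain n f where Y: "Y = (n,f)" by (cases Y)
  define h where "h = snd (sig_plus (n,f) Q)"
  have sp: "sig_plus (n,f) Q = (n+q, h)" unfolding h_def by (simp add: prod_eq_iff Q)
  have hv: "\<And>i j. h i j = (if j < n then f i j else if n \<le> i then g (i - n) (j - n) else 0)"
    unfolding h_def by (simp add: plus_snd Q)
  have mn: "m < n" using m Y by simp
  define Cs where "Cs = iCs f m"
  have CsE: "iCs h m = Cs" unfolding Cs_def iCs_def
    by (rule filter_cong) (use mn in \<open>auto simp: hv\<close>)
  have cl: "\<And>a. a < length Cs \<Longrightarrow> Cs ! a < m" unfolding Cs_def iCs_def by (rule Cs_less)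
  define G where "G = (\<lambda>p q. ival f m (ipos m Cs p) (ipos m Cs q))"
  have key: "ival h m (ipos m Cs a) (ipos m Cs b) = snd (sig_plus (n + length Cs, G) Q) a b"
    if ab: "a < b" for a b
  proof -
    consider "b < n + length Cs" | "n + length Cs \<le> a" | "a < n + length Cs" "n + length Cs \<le> b"
      using ab by linarith
    then show ?thesis
    proof cases
      case 1
      then show ?thesis using ab ival_agree[of n h f m, OF _ mn ipos_ok ipos_ok] cl mn hv
        by (simp add: plus_snd G_def Q)
    next
      case 2
      have "ipos m Cs a = Inl (a - length Cs)" "ipos m Cs b = Inl (b - length Cs)"
        using 2 ab mn by (auto simp: ipos_def)
      moreover have "h (a - length Cs) (b - length Cs) = g (a - (n + length Cs)) (b - (n + length Cs))"
      proof -
        have x: "n \<le> a - length Cs" "\<not> b - length Cs < n" using 2 ab by auto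
        show ?thesis using hv[of "a - length Cs" "b - length Cs"] x by (simp add: add.commute diff_diff_add)
      qed
      ultimately show ?thesis using 2 ab by (simp add: plus_snd Q)
    next
      case 3
      have ib: "ipos m Cs b = Inl (b - length Cs)" using 3 mn by (simp add: ipos_def)
      have "ival h m (ipos m Cs a) (Inl (b - length Cs)) = 0"
        using 3 mn cl by (auto simp: ipos_def hv)
      then show ?thesis using 3 ib by (simp add: plus_snd Q)
    qed
  qed
  show ?thesis
    unfolding Y sp sig_infl_alt
    by (rule sig_eqI) (use key in \<open>auto simp: Q CsE G_def Cs_def\<close>)
qed

lemma restrL_fst[simp]: "fst (restrL X L) = length L" by (simp add: restrL_def)
lemma restrL_snd: "snd (restrL X L) i j = snd X (L ! i) (L ! j)" by (simp add: restrL_def)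

lemma restrL_plus_l:
  "sig_eq (restrL (sig_plus P Y) ([0..<fst P] @ map ((+) (fst P)) L)) (sig_plus P (restrL Y L))"
proof (rule sig_eqI)
  show "fst (restrL (sig_plus P Y) ([0..<fst P] @ map ((+) (fst P)) L)) = fst (sig_plus P (restrL Y L))"
    by simp
  fix a b assume ab: "a < b" "b < fst (restrL (sig_plus P Y) ([0..<fst P] @ map ((+) (fst P)) L))"
  then have b: "b < fst P + length L" by simp
  show "snd (restrL (sig_plus P Y) ([0..<fst P] @ map ((+) (fst P)) L)) a b = snd (sig_plus P (restrL Y L)) a b"
  proof (cases "b < fst P")
    case True then show ?thesis using ab by (simp add: restrL_snd plus_snd nth_append)
  next
    case False
    then show ?thesis using ab b by (auto simp: restrL_snd plus_snd nth_append)
  qed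
qed

lemma restrL_plus_r:
  assumes "set L \<subseteq> {0..<fst Y}"
  shows "sig_eq (restrL (sig_plus Y Q) (L @ map ((+) (fst Y)) [0..<fst Q])) (sig_plus (restrL Y L) Q)"
proof (rule sig_eqI)
  show "fst (restrL (sig_plus Y Q) (L @ map ((+) (fst Y)) [0..<fst Q])) = fst (sig_plus (restrL Y L) Q)"
    by simp
  fix a b assume ab: "a < b" "b < fst (restrL (sig_plus Y Q) (L @ map ((+) (fst Y)) [0..<fst Q]))"
  then have b: "b < length L + fst Q" by simp
  have Ln: "\<And>i. i < length L \<Longrightarrow> L ! i < fst Y" using assms nth_mem by fastforce
  show "snd (restrL (sig_plus Y Q) (L @ map ((+) (fst Y)) [0..<fst Q])) a b = snd (sig_plus (restrL Y L) Q) a b"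
  proof (cases "b < length L")
    case True then show ?thesis using ab Ln[of a] Ln[of b] by (simp add: restrL_snd plus_snd nth_append)
  next
    case False
    then show ?thesis using ab b Ln[of a] by (auto simp: restrL_snd plus_snd nth_append)
  qed
qed

lemma sorted_shift: "sorted_wrt (<) L \<Longrightarrow> sorted_wrt (<) (map ((+) (p::nat)) L)"
  by (simp add: sorted_wrt_map)

lemma sorted_L_plus_l: "sorted_wrt (<) L \<Longrightarrow> sorted_wrt (<) ([0..<p] @ map ((+) (p::nat)) L)"
  by (auto simp: sorted_wrt_append sorted_wrt_map sorted_wrt_upt)

lemma sorted_L_plus_r: "sorted_wrt (<) L \<Longrightarrow> set L \<subseteq> {0..<n} \<Longrightarrow>
   sorted_wrt (<) (L @ map ((+) (n::nat)) [0..<q])"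
  by (auto simp: sorted_wrt_append sorted_wrt_map sorted_wrt_upt)


lemma exp_restrL: "restrL (sig_exp X) L = sig_exp (restrL X L)"
  by (simp add: restrL_def sig_exp_def)

lemma iCs_exp: "iCs (\<lambda>i j. f i j + 1) m = [0..<m]"
  by (simp add: iCs_def)
lemma iCs_exp': "iCs (\<lambda>i j. Suc (f i j)) m = [0..<m]"
  by (simp add: iCs_def)

lemma exp_infl:
  assumes m: "m < fst X"
  shows "\<exists>L. sorted_wrt (<) L \<and> set L \<subseteq> {0..<fst (sig_infl (sig_exp X) m)} \<and>
     sig_eq (sig_exp (sig_infl X m)) (restrL (sig_infl (sig_exp X) m) L)"
proof -
  obtain n f where X: "X = (n,f)" by (cases X)
  have mn: "m < n" using m X by simp
  have eX: "sig_exp X = (n, \<lambda>i j. f i j + 1)" by (simp add: X sig_exp_def)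
  define Cs where "Cs = iCs f m"
  define k where "k = length Cs"
  have cl: "\<And>a. a < k \<Longrightarrow> Cs ! a < m" unfolding Cs_def iCs_def k_def by (rule Cs_less)
  have cpos: "\<And>a. a < k \<Longrightarrow> 0 < f (Cs ! a) m"
    unfolding Cs_def iCs_def k_def using nth_mem by fastforce
  have sC: "sorted_wrt (<) Cs" unfolding Cs_def iCs_def by (rule Cs_sorted)
  have kle: "k \<le> m" unfolding k_def Cs_def iCs_def by (metis length_filter_le length_upt minus_nat.diff_0)
  define L where "L = [0..<m] @ map ((+) m) Cs @ map ((+) (2*m)) [0..<n-m]"
  have lenL: "length L = n + k" using mn by (simp add: L_def k_def)
  have sL: "sorted_wrt (<) L" unfolding L_def using sC cl k_def
    apply (auto simp: sorted_wrt_append sorted_wrt_map sorted_wrt_upt in_set_conv_nth)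
    subgoal for xa i using cl[of i] k_def by linarith
    done
  have setL: "set L \<subseteq> {0..<n+m}" unfolding L_def using cl k_def mn
    apply (auto simp: in_set_conv_nth)
    subgoal for i using cl[of i] k_def by linarith
    done
  have Lnth: "ipos m [0..<m] (L ! p) = ipos m Cs p" if p: "p < n + k" for p
  proof -
    consider "p < m" | "m \<le> p" "p < m + k" | "m + k \<le> p" by linarith
    then show ?thesis
    proof cases
      case 1
      then have "L ! p = p" unfolding L_def by (simp add: nth_append)
      then show ?thesis using 1 by (simp add: ipos_def)
    next
      case 2
      then have "L ! p = m + Cs ! (p - m)" unfolding L_def k_def by (simp add: nth_append less_diff_conv2)
      moreover have "Cs ! (p - m) < m" using cl 2 by simp
      ultimately show ?thesis using 2 by (simp add: ipos_def k_def)
    next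
      case 3
      have a: "\<not> p < m" "\<not> p - m < length Cs" "p - (m + length Cs) < n - m" using 3 p mn k_def by auto
      have "L ! p = 2 * m + (p - m - k)" unfolding L_def k_def using a
        by (simp add: nth_append)
      then show ?thesis using 3 by (simp add: ipos_def k_def)
    qed
  qed
  have vals: "ival (\<lambda>i j. f i j + 1) m (ipos m Cs p) (ipos m Cs q) = ival f m (ipos m Cs p) (ipos m Cs q) + 1"
    if "p < n + k" "q < n + k" for p q
  proof -
    have "ival (\<lambda>i j. f i j + 1) m x y = ival f m x y + 1" if "\<And>j. y = Inr j \<Longrightarrow> 0 < f j m" for x y
      using that by (cases x; cases y) auto
    moreover have "0 < f j m" if "ipos m Cs q = Inr j" for j
      using that cpos[of "q - m"] unfolding ipos_def k_def by (auto split: if_splits)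
    ultimately show ?thesis by blast
  qed
  show ?thesis
  proof (intro exI conjI)
    show "sorted_wrt (<) L" by (rule sL)
    show "set L \<subseteq> {0..<fst (sig_infl (sig_exp X) m)}" using setL by (simp add: eX sig_infl_alt iCs_exp iCs_exp')
    show "sig_eq (sig_exp (sig_infl X m)) (restrL (sig_infl (sig_exp X) m) L)"
    proof (rule sig_eqI)
      show "fst (sig_exp (sig_infl X m)) = fst (restrL (sig_infl (sig_exp X) m) L)"
        by (simp add: X sig_infl_alt lenL k_def Cs_def)
      fix p q assume pq: "p < q" "q < fst (sig_exp (sig_infl X m))"
      then have q: "q < n + k" by (simp add: X sig_infl_alt k_def Cs_def)
      then show "snd (sig_exp (sig_infl X m)) p q = snd (restrL (sig_infl (sig_exp X) m) L) p q"
        using pq Lnth[of p] Lnth[of q] vals[of p q]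
        by (simp add: X sig_exp_def sig_infl_alt restrL_snd iCs_exp' Cs_def[symmetric])
    qed
  qed
qed

lemma LE_restrL_cong:
  assumes "sig_eq A A'" "sorted_wrt (<) L" "set L \<subseteq> {0..<fst A}"
  shows "LE (restrL A L) A'"
proof -
  have "sig_eq (restrL A L) (restrL A' L)" by (rule restrL_cong[OF assms])
  moreover have "LE (restrL A' L) A'" using assms sig_eq_fst by (metis LE_restrL)
  ultimately show ?thesis using LE_eq_trans by blast
qed

lemma step_obtain:
  assumes "sig_step Z W"
  obtains m L where "m < fst Z" "sorted_wrt (<) L" "set L \<subseteq> {0..<fst (sig_infl Z m)}"
    "sig_eq W (restrL (sig_infl Z m) L)"
proof -
  obtain m T where m: "m < fst Z" and T: "T \<subseteq> {0..<fst (sig_infl Z m)}"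
    and e: "sig_eq W (sig_restr (sig_infl Z m) T)"
    using assms unfolding sig_step_def by blast
  define L where "L = sorted_list_of_set T"
  have fT: "finite T" using T finite_subset by blast
  have sL: "sorted_wrt (<) L" unfolding L_def by simp
  have TL: "T = set L" unfolding L_def using fT by simp
  show ?thesis using that m sL T e unfolding TL restr_set[OF sL] by blast
qed

lemma LE_induct_step:
  assumes step: "\<And>Z W. sig_step Z W \<Longrightarrow> LE (F W) (F Z)"
    and cong: "\<And>A B. sig_eq A B \<Longrightarrow> sig_eq (F A) (F B)"
    and le: "LE Y X"
  shows "LE (F Y) (F X)"
proof -
  obtain Y1 where e: "sig_eq Y Y1" and l: "sig_step\<^sup>*\<^sup>* X Y1" using le unfolding LE_def sig_le_def by blast
  from l have "LE (F Y1) (F X)"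
  proof (induction rule: rtranclp_induct)
    case base then show ?case by simp
  next
    case (step y z) then show ?case using assms(1) LE_trans by blast
  qed
  then show ?thesis using cong[OF e] LE_eq_trans by blast
qed

lemma LE_plus_l: "LE Y X \<Longrightarrow> LE (sig_plus P Y) (sig_plus P X)"
proof (rule LE_induct_step[where F = "sig_plus P"])
  show "\<And>A B. sig_eq A B \<Longrightarrow> sig_eq (sig_plus P A) (sig_plus P B)" by (simp add: plus_cong)
  fix Z W assume "sig_step Z W"
  then obtain m L where m: "m < fst Z" and sL: "sorted_wrt (<) L"
    and Ls: "set L \<subseteq> {0..<fst (sig_infl Z m)}" and e: "sig_eq W (restrL (sig_infl Z m) L)"
    by (rule step_obtain)
  let ?I = "sig_infl Z m"
  let ?L = "[0..<fst P] @ map ((+) (fst P)) L"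
  have "sig_eq (sig_plus P W) (sig_plus P (restrL ?I L))" by (simp add: plus_cong e)
  also have "sig_eq (sig_plus P (restrL ?I L)) (restrL (sig_plus P ?I) ?L)"
    by (rule sig_eq_sym[OF restrL_plus_l])
  finally have 1: "sig_eq (sig_plus P W) (restrL (sig_plus P ?I) ?L)" .
  have 2: "LE (restrL (sig_plus P ?I) ?L) (sig_infl (sig_plus P Z) (fst P + m))"
    by (rule LE_restrL_cong[OF sig_eq_sym[OF infl_plus_l[OF m]] sorted_L_plus_l[OF sL]])
       (use Ls in auto)
  have 3: "LE (sig_infl (sig_plus P Z) (fst P + m)) (sig_plus P Z)" by (rule LE_infl) (use m in simp)
  show "LE (sig_plus P W) (sig_plus P Z)" using 1 2 3 LE_eq_trans LE_trans by blast
qed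

lemma LE_plus_r: "LE Y X \<Longrightarrow> LE (sig_plus Y Q) (sig_plus X Q)"
proof (rule LE_induct_step[where F = "\<lambda>A. sig_plus A Q"])
  show "\<And>A B. sig_eq A B \<Longrightarrow> sig_eq (sig_plus A Q) (sig_plus B Q)" by (simp add: plus_cong)
  fix Z W assume "sig_step Z W"
  then obtain m L where m: "m < fst Z" and sL: "sorted_wrt (<) L"
    and Ls: "set L \<subseteq> {0..<fst (sig_infl Z m)}" and e: "sig_eq W (restrL (sig_infl Z m) L)"
    by (rule step_obtain)
  let ?I = "sig_infl Z m"
  let ?L = "L @ map ((+) (fst ?I)) [0..<fst Q]"
  have "sig_eq (sig_plus W Q) (sig_plus (restrL ?I L) Q)" by (simp add: plus_cong e)
  also have "sig_eq (sig_plus (restrL ?I L) Q) (restrL (sig_plus ?I Q) ?L)"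
    by (rule sig_eq_sym[OF restrL_plus_r[OF Ls]])
  finally have 1: "sig_eq (sig_plus W Q) (restrL (sig_plus ?I Q) ?L)" .
  have 2: "LE (restrL (sig_plus ?I Q) ?L) (sig_infl (sig_plus Z Q) m)"
    by (rule LE_restrL_cong[OF sig_eq_sym[OF infl_plus_r[OF m]] sorted_L_plus_r[OF sL Ls]])
       (use Ls in auto)
  have 3: "LE (sig_infl (sig_plus Z Q) m) (sig_plus Z Q)" by (rule LE_infl) (use m in simp)
  show "LE (sig_plus W Q) (sig_plus Z Q)" using 1 2 3 LE_eq_trans LE_trans by blast
qed

lemma LE_plus: "LE A A' \<Longrightarrow> LE B B' \<Longrightarrow> LE (sig_plus A B) (sig_plus A' B')"
  using LE_plus_l LE_plus_r LE_trans by blast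

lemma LE_exp: "LE Y X \<Longrightarrow> LE (sig_exp Y) (sig_exp X)"
proof (rule LE_induct_step[where F = sig_exp])
  show "\<And>A B. sig_eq A B \<Longrightarrow> sig_eq (sig_exp A) (sig_exp B)" by (simp add: exp_cong)
  fix Z W assume "sig_step Z W"
  then obtain m L where m: "m < fst Z" and sL: "sorted_wrt (<) L"
    and Ls: "set L \<subseteq> {0..<fst (sig_infl Z m)}" and e: "sig_eq W (restrL (sig_infl Z m) L)"
    by (rule step_obtain)
  let ?I = "sig_infl Z m"
  obtain L0 where sL0: "sorted_wrt (<) L0" and L0s: "set L0 \<subseteq> {0..<fst (sig_infl (sig_exp Z) m)}"
    and e0: "sig_eq (sig_exp ?I) (restrL (sig_infl (sig_exp Z) m) L0)"
    using exp_infl[OF m] by blast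
  have 1: "sig_eq (sig_exp W) (restrL (sig_exp ?I) L)" by (simp add: exp_cong e exp_restrL)
  have 2: "LE (restrL (sig_exp ?I) L) (restrL (sig_infl (sig_exp Z) m) L0)"
    by (rule LE_restrL_cong[OF e0 sL]) (use Ls in simp)
  have 3: "LE (restrL (sig_infl (sig_exp Z) m) L0) (sig_infl (sig_exp Z) m)"
    by (rule LE_restrL[OF sL0 L0s])
  have 4: "LE (sig_infl (sig_exp Z) m) (sig_exp Z)" by (rule LE_infl) (use m in simp)
  show "LE (sig_exp W) (sig_exp Z)" using 1 2 3 4 LE_eq_trans LE_trans by blast
qed

definition glue :: "sig \<Rightarrow> sig \<Rightarrow> sig" where
  "glue Q S = (fst Q + fst S, \<lambda>i j. if j < fst Q then snd Q i j
       else if fst Q \<le> i then snd S (i - fst Q) (j - fst Q) else 1)"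

lemma glue_fst[simp]: "fst (glue Q S) = fst Q + fst S" by (simp add: glue_def)
lemma glue_snd: "snd (glue Q S) i j = (if j < fst Q then snd Q i j
       else if fst Q \<le> i then snd S (i - fst Q) (j - fst Q) else 1)" by (simp add: glue_def)

lemma glue_cong: assumes "sig_eq Q Q'" shows "sig_eq (glue Q S) (glue Q' S)"
proof (rule sig_eqI)
  have f: "fst Q' = fst Q" using assms sig_eq_fst by metis
  show "fst (glue Q S) = fst (glue Q' S)" using f by simp
  fix i j assume "i < j" "j < fst (glue Q S)"
  then show "snd (glue Q S) i j = snd (glue Q' S) i j" using sig_eqD[OF assms] f
    by (simp add: glue_snd)
qed

lemma exp_plus_glue: "sig_eq (sig_exp (sig_plus W T)) (glue (sig_exp W) (sig_exp T))"
  by (rule sig_eqI) (auto simp: glue_snd plus_snd)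

lemma iCs_glue: "iCs (snd (glue Q S)) (fst Q) = [0..<fst Q]"
  unfolding iCs_def by (simp add: glue_snd)

lemma glue_double:
  assumes T: "0 < fst T"
  shows "sig_eq (sig_infl (glue Q (sig_exp T)) (fst Q)) (glue (sig_plus Q Q) (sig_exp T))"
proof -
  obtain q g where Q: "Q = (q,g)" by (cases Q)
  define h where "h = snd (glue Q (sig_exp T))"
  have sp: "glue (q,g) (sig_exp T) = (q + fst T, h)" unfolding h_def by (simp add: prod_eq_iff Q)
  have hv: "\<And>i j. h i j = (if j < q then g i j else if q \<le> i then snd T (i - q) (j - q) + 1 else 1)"
    unfolding h_def by (simp add: glue_snd Q)
  have CsE: "iCs h q = [0..<q]" using iCs_glue[of Q "sig_exp T"] unfolding h_def Q by simp
  have key: "ival h q (ipos q [0..<q] a) (ipos q [0..<q] b) = snd (glue (sig_plus Q Q) (sig_exp T)) a b"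
    if ab: "a < b" "b < 2 * q + fst T" for a b
  proof -
    consider "b < q" | "a < q" "q \<le> b" "b < 2*q" | "q \<le> a" "b < 2*q" | "a < q" "2*q \<le> b"
      | "q \<le> a" "a < 2*q" "2*q \<le> b" | "2*q \<le> a" using ab by linarith
    then show ?thesis
    proof cases
      case 1 then show ?thesis using ab by (simp add: ipos_def hv glue_snd plus_snd Q)
    next
      case 2
      then have "\<not> q \<le> b - q" by linarith
      then show ?thesis using ab 2 by (simp add: ipos_def hv glue_snd plus_snd Q)
    next
      case 3
      then have "b - q < q" by linarith
      then show ?thesis using ab 3 by (simp add: ipos_def hv glue_snd plus_snd Q)
    next
      case 4
      then have "\<not> b - q < q" "q \<le> b - q" by linarith+
      then show ?thesis using ab 4 by (simp add: ipos_def hv glue_snd plus_snd Q)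
    next
      case 5
      have nq: "\<not> q \<le> a - q" using 5 by linarith
      have "ipos q [0..<q] a = Inr (a - q)" "ipos q [0..<q] b = Inl (b - q)"
        using 5 by (auto simp: ipos_def)
      moreover have "h (a - q) q = 1" using 5 nq by (simp add: hv)
      moreover have "b - q \<noteq> q \<Longrightarrow> h q (b - q) \<ge> 1"
      proof -
        have "\<not> b - q < q" using 5 by linarith
        then show "b - q \<noteq> q \<Longrightarrow> h q (b - q) \<ge> 1" by (simp add: hv)
      qed
      ultimately show ?thesis using 5 ab by (auto simp: glue_snd plus_snd Q min_def)
    next
      case 6
      have "ipos q [0..<q] a = Inl (a - q)" "ipos q [0..<q] b = Inl (b - q)"
        using 6 ab by (auto simp: ipos_def)
      moreover have "h (a - q) (b - q) = snd T (a - (q + q)) (b - (q + q)) + 1"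
      proof -
        have "q \<le> a - q" "\<not> b - q < q" "a - q - q = a - (q + q)" "b - q - q = b - (q + q)" using 6 ab by linarith+
        then show ?thesis using hv[of "a - q" "b - q"] by simp
      qed
      ultimately show ?thesis using 6 ab by (simp add: glue_snd plus_snd Q)
    qed
  qed
  show ?thesis
    unfolding Q sp sig_infl_alt
    by (rule sig_eqI) (use key in \<open>auto simp: CsE Q\<close>)
qed

definition copies :: "nat \<Rightarrow> sig \<Rightarrow> sig" where "copies n Q = sig_sum (replicate n Q)"

lemma sig_sum_Cons: "sig_sum (x # xs) = sig_plus x (sig_sum xs)" by (simp add: sig_sum_def)
lemma sig_sum_Nil: "sig_sum [] = sig_zero" by (simp add: sig_sum_def)
lemma sig_zero_fst[simp]: "fst sig_zero = 0" by (simp add: sig_zero_def)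
lemma sig_sum_fst: "fst (sig_sum xs) = sum_list (map fst xs)"
  by (induct xs) (auto simp: sig_sum_Cons sig_sum_Nil)

lemma copies_fst[simp]: "fst (copies n Q) = n * fst Q"
  by (simp add: copies_def sig_sum_fst sum_list_replicate)

lemma copies_Suc: "copies (Suc n) Q = sig_plus Q (copies n Q)"
  by (simp add: copies_def sig_sum_Cons)

lemma copies_add: "sig_eq (copies (a + b) Q) (sig_plus (copies a Q) (copies b Q))"
proof (induct a)
  case 0 then show ?case
    by (simp add: copies_def sig_sum_Nil) (rule sig_eq_sym[OF plus_zero_l], simp)
next
  case (Suc a)
  have "sig_eq (copies (Suc a + b) Q) (sig_plus Q (sig_plus (copies a Q) (copies b Q)))"
    using Suc by (simp add: copies_Suc plus_cong)
  also have "sig_eq \<dots> (sig_plus (copies (Suc a) Q) (copies b Q))"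
    by (simp add: copies_Suc sig_eq_sym[OF plus_assoc])
  finally show ?case .
qed

lemma pre_plus: "sig_eq (pre (fst A) (sig_plus A B)) A"
  by (rule sig_eqI) (auto simp: pre_def plus_snd)

lemma pre_glue: "k \<le> fst Q \<Longrightarrow> sig_eq (pre k (glue Q S)) (pre k Q)"
  by (rule sig_eqI) (auto simp: pre_def glue_snd)

lemma pre_cong: "sig_eq A B \<Longrightarrow> k \<le> fst A \<Longrightarrow> sig_eq (pre k A) (pre k B)"
  unfolding sig_eq_def pre_def by auto

lemma pre_full: "sig_eq (pre (fst A) A) A" by (simp add: pre_def)

lemma glue_pow:
  assumes T: "0 < fst T"
  shows "LE (glue (copies (2^t) Q) (sig_exp T)) (glue Q (sig_exp T))"
proof (induct t)
  case 0
  have "sig_eq (copies 1 Q) Q" by (simp add: copies_def sig_sum_Cons sig_sum_Nil plus_zero_r)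
  then show ?case by (simp add: LE_eq glue_cong)
next
  case (Suc t)
  let ?A = "copies (2^t) Q"
  have "sig_eq (glue (copies (2^Suc t) Q) (sig_exp T)) (glue (sig_plus ?A ?A) (sig_exp T))"
    using copies_add[of "2^t" "2^t" Q] by (simp add: glue_cong mult_2)
  also have "sig_eq \<dots> (sig_infl (glue ?A (sig_exp T)) (fst ?A))"
    by (rule sig_eq_sym[OF glue_double[OF T]])
  finally have "LE (glue (copies (2^Suc t) Q) (sig_exp T)) (glue ?A (sig_exp T))"
    using LE_infl[of "fst ?A" "glue ?A (sig_exp T)"] T LE_eq_trans by simp
  then show ?case using Suc LE_trans by blast
qed

lemma copies_le_glue:
  assumes T: "0 < fst T"
  shows "LE (copies N Q) (glue Q (sig_exp T))"
proof -
  have N: "N \<le> 2^N" using less_exp[of N] by simp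
  let ?B = "copies (2^N) Q"
  have "sig_eq ?B (sig_plus (copies N Q) (copies (2^N - N) Q))"
    using copies_add[of N "2^N - N" Q] N by simp
  then have "sig_eq (pre (N * fst Q) ?B) (pre (N * fst Q) (sig_plus (copies N Q) (copies (2^N - N) Q)))"
    by (rule pre_cong) (use N in simp)
  then have e1: "sig_eq (copies N Q) (pre (N * fst Q) ?B)"
    using pre_plus[of "copies N Q" "copies (2^N - N) Q"] by (metis copies_fst sig_eq_sym sig_eq_trans)
  have e2: "sig_eq (pre (N * fst Q) ?B) (pre (N * fst Q) (glue ?B (sig_exp T)))"
    by (rule sig_eq_sym[OF pre_glue]) (use N in simp)
  have "LE (pre (N * fst Q) (glue ?B (sig_exp T))) (glue ?B (sig_exp T))"
  proof -
    have "N * fst Q \<le> 2^N * fst Q + fst T" using mult_le_mono1[OF N, of "fst Q"] by linarith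
    then show ?thesis by (intro LE_pre) simp
  qed
  then show ?thesis using e1 e2 glue_pow[OF T, of N Q] LE_eq_trans LE_trans by blast
qed

lemma sig_sum_append: "sig_eq (sig_sum (xs @ ys)) (sig_plus (sig_sum xs) (sig_sum ys))"
proof (induct xs)
  case Nil then show ?case by (simp add: sig_sum_Nil sig_eq_sym[OF plus_zero_l])
next
  case (Cons x xs)
  have "sig_eq (sig_sum ((x # xs) @ ys)) (sig_plus x (sig_plus (sig_sum xs) (sig_sum ys)))"
    using Cons by (simp add: sig_sum_Cons plus_cong)
  also have "sig_eq \<dots> (sig_plus (sig_sum (x # xs)) (sig_sum ys))"
    by (simp add: sig_sum_Cons sig_eq_sym[OF plus_assoc])
  finally show ?case .
qed

lemma sig_sum_cong: "list_all2 sig_eq As Bs \<Longrightarrow> sig_eq (sig_sum As) (sig_sum Bs)"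
  by (induct rule: list_all2_induct) (auto simp: sig_sum_Cons plus_cong)

lemma LE_sum: "list_all2 LE As Bs \<Longrightarrow> LE (sig_sum As) (sig_sum Bs)"
  by (induct rule: list_all2_induct) (auto simp: sig_sum_Cons LE_plus)

lemma sig_sum_drop_zero:
  "sig_eq (sig_sum (map sig_exp Xs)) (sig_sum (map sig_exp (filter (\<lambda>A. 0 < fst A) Xs)))"
proof (induct Xs)
  case Nil then show ?case by simp
next
  case (Cons X Xs)
  show ?case
  proof (cases "0 < fst X")
    case True then show ?thesis using Cons by (simp add: sig_sum_Cons plus_cong)
  next
    case False
    then have "sig_eq (sig_sum (map sig_exp (X # Xs))) (sig_sum (map sig_exp Xs))"
      by (simp add: sig_sum_Cons plus_zero_l)
    then show ?thesis using Cons False sig_eq_trans by auto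
  qed
qed

lemma plus_exp_split:
  assumes e: "sig_eq (sig_plus (sig_exp A) R) (sig_plus (sig_exp B) R')"
    and A: "0 < fst A" and B: "0 < fst B"
  shows "fst A = fst B \<and> sig_eq A B \<and> sig_eq R R'"
proof -
  have tot: "fst A + fst R = fst B + fst R'" using sig_eq_fst[OF e] by simp
  have nlt: False if lt: "fst X1 < fst X2" and pos: "0 < fst X1"
    and ee: "sig_eq (sig_plus (sig_exp X1) R1) (sig_plus (sig_exp X2) R2)" for X1 X2 R1 R2
  proof -
    have "snd (sig_plus (sig_exp X1) R1) (fst X1 - 1) (fst X1) = snd (sig_plus (sig_exp X2) R2) (fst X1 - 1) (fst X1)"
      by (rule sig_eqD[OF ee]) (use lt pos sig_eq_fst[OF ee] in auto)
    moreover have "\<not> fst X1 \<le> fst X1 - Suc 0" using pos by linarith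
    ultimately show False using lt pos by (simp add: plus_snd)
  qed
  have "\<not> fst A < fst B" using nlt[OF _ A e] by blast
  moreover have "\<not> fst B < fst A" using nlt[OF _ B sig_eq_sym[OF e]] by blast
  ultimately have f: "fst A = fst B" by linarith
  have "sig_eq A B"
  proof (rule sig_eqI)
    show "fst A = fst B" by (rule f)
    fix i j assume "i < j" "j < fst A"
    then show "snd A i j = snd B i j" using sig_eqD[OF e, of i j] f by (simp add: plus_snd)
  qed
  moreover have "sig_eq R R'"
  proof (rule sig_eqI)
    show "fst R = fst R'" using tot f by simp
    fix i j assume "i < j" "j < fst R"
    then show "snd R i j = snd R' i j" using sig_eqD[OF e, of "i + fst A" "j + fst A"] f
      by (simp add: plus_snd)
  qed
  ultimately show ?thesis using f by blast
qed

lemma sum_pos_empty: "\<forall>A\<in>set As. 0 < fst A \<Longrightarrow> sum_list (map fst As) = (0::nat) \<Longrightarrow> As = []"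
  by (cases As) auto

lemma sum_exp_unique:
  "(\<forall>A\<in>set As. 0 < fst A) \<Longrightarrow> (\<forall>B\<in>set Bs. 0 < fst B) \<Longrightarrow>
   sig_eq (sig_sum (map sig_exp As)) (sig_sum (map sig_exp Bs)) \<Longrightarrow>
   length As = length Bs \<and> (\<forall>i<length As. sig_eq (As ! i) (Bs ! i))"
proof (induct As arbitrary: Bs)
  case Nil
  have "fst (sig_sum (map sig_exp Bs)) = 0" using sig_eq_fst[OF Nil(3)] by (simp add: sig_sum_Nil)
  then have "sum_list (map fst Bs) = 0" by (simp add: sig_sum_fst o_def)
  then have "Bs = []" using Nil(2) sum_pos_empty by blast
  then show ?case by simp
next
  case (Cons A As)
  have "fst (sig_sum (map sig_exp Bs)) > 0" using sig_eq_fst[OF Cons(4)] Cons(2) by (simp add: sig_sum_Cons)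
  then obtain B Bs' where Bs: "Bs = B # Bs'" by (cases Bs) (auto simp: sig_sum_Nil)
  have s: "fst A = fst B \<and> sig_eq A B \<and> sig_eq (sig_sum (map sig_exp As)) (sig_sum (map sig_exp Bs'))"
    by (rule plus_exp_split) (use Cons(2-4) Bs in \<open>auto simp: sig_sum_Cons\<close>)
  have p1: "\<forall>A\<in>set As. 0 < fst A" using Cons(2) by simp
  have p2: "\<forall>B\<in>set Bs'. 0 < fst B" using Cons(3) Bs by simp
  have ih: "length As = length Bs' \<and> (\<forall>i<length As. sig_eq (As ! i) (Bs' ! i))"
    using Cons(1)[OF p1 p2] s by blast
  show ?case
  proof (intro conjI allI impI)
    show "length (A # As) = length Bs" using ih Bs by simp
    fix i assume "i < length (A # As)"
    then show "sig_eq ((A # As) ! i) (Bs ! i)" using ih s Bs by (cases i) auto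
  qed
qed

lemma zero_sig_eq: "sig_eq X sig_zero \<longleftrightarrow> fst X = 0" by (auto simp: sig_eq_def sig_zero_def)
lemma one_sig_eq: "sig_eq X sig_one \<longleftrightarrow> fst X = 1" by (auto simp: sig_eq_def sig_one_def)

lemma rho_rel_cong:
  assumes "rho_rel X a" "sig_eq X Y" shows "rho_rel Y a"
proof -
  have s: "sig_eq Y X" using assms(2) by (rule sig_eq_sym)
  from assms(1) show ?thesis
  proof (cases rule: rho_rel.cases)
    case rho_zero then show ?thesis using s by (metis rho_rel.rho_zero sig_eq_trans)
  next
    case rho_one then show ?thesis using s by (metis rho_rel.rho_one sig_eq_trans)
  next
    case (rho_sum As bs) then show ?thesis using s sig_eq_trans[OF s] by (metis rho_rel.rho_sum)
  qed
qed

lemma sum_fst_one: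
  assumes "\<forall>A\<in>set As. 0 < fst A" "sum_list (map fst As) = (1::nat)"
  shows "\<exists>A. As = [A] \<and> fst A = 1"
proof (cases As)
  case Nil then show ?thesis using assms by simp
next
  case (Cons A As')
  then have "As' = []" using assms by (cases As') auto
  then show ?thesis using Cons assms by simp
qed

lemma ord_sum_single: "ord_sum [C (y # ys)] = C (y # ys)"
  by (simp add: ord_sum_def ord_zero_def)

lemma omexp_one: "ord_omexp ord_one = ord_one"
  by (simp add: ord_omexp_def ord_one_def ord_zero_def ord_minus1_def)

lemma pos_of: "\<forall>i<length As. BB (As ! i) \<and> \<not> sig_eq (As ! i) sig_zero \<and> P i \<Longrightarrow> \<forall>A\<in>set As. 0 < fst A"
  by (metis in_set_conv_nth zero_sig_eq neq0_conv)

lemma rho_rel_one: "rho_rel X a \<Longrightarrow> fst X = 1 \<Longrightarrow> a = ord_one"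
proof (induct rule: rho_rel.induct)
  case (rho_zero X) then show ?case by (simp add: zero_sig_eq)
next
  case (rho_one X) then show ?case by simp
next
  case (rho_sum As bs X)
  note O = rho_sum
  have pos: "\<forall>A\<in>set As. 0 < fst A" using rho_sum(2) by (rule pos_of)
  have "sum_list (map fst As) = 1" using sig_eq_fst[OF rho_sum(3)] rho_sum(4)
    by (simp add: sig_sum_fst o_def)
  then obtain A where A: "As = [A]" "fst A = 1" using sum_fst_one pos by blast
  then obtain b where b: "bs = [b]" using rho_sum(1) by (cases bs) auto
  have "b = ord_one" using rho_sum(2) A b by auto
  then show ?case using b omexp_one by (simp add: ord_sum_single ord_one_def)
qed

lemma rho_rel_unique: "rho_rel X a \<Longrightarrow> rho_rel X b \<Longrightarrow> a = b"
proof (induct arbitrary: b rule: rho_rel.induct)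
  case (rho_zero X)
  from rho_zero(2) show ?case
  proof (cases rule: rho_rel.cases)
    case rho_zero then show ?thesis by simp
  next
    case rho_one then show ?thesis using rho_zero(1) by (simp add: zero_sig_eq one_sig_eq)
  next
    case (rho_sum As bs)
    have pos: "\<forall>A\<in>set As. 0 < fst A" using rho_sum(3) by (rule pos_of)
    have "sum_list (map fst As) = 0" using sig_eq_fst[OF rho_sum(4)] rho_zero(1)
      by (simp add: sig_sum_fst o_def zero_sig_eq)
    then have "As = []" using pos sum_pos_empty by blast
    then show ?thesis using rho_sum by (simp add: ord_sum_def)
  qed
next
  case (rho_one X)
  from rho_one(2) show ?case
  proof (cases rule: rho_rel.cases)
    case rho_zero then show ?thesis using rho_one(1) by (simp add: zero_sig_eq one_sig_eq)
  next
    case rho_one then show ?thesis by simp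
  next
    case (rho_sum As bs)
    have "fst X = 1" using rho_one(1) by (simp add: one_sig_eq)
    then show ?thesis using rho_rel_one[OF rho_one(2)] by simp
  qed
next
  case (rho_sum As bs X)
  note O = rho_sum
  have pos: "\<forall>A\<in>set As. 0 < fst A" using rho_sum(2) by (rule pos_of)
  from rho_sum(4) show ?case
  proof (cases rule: rho_rel.cases)
    case rho_zero
    have "sum_list (map fst As) = 0" using sig_eq_fst[OF rho_sum(3)] rho_zero
      by (simp add: sig_sum_fst o_def zero_sig_eq)
    then have "As = []" using pos sum_pos_empty by blast
    then show ?thesis using rho_zero rho_sum(1) by (simp add: ord_sum_def)
  next
    case rho_one
    have r: "\<forall>i<length As. BB (As ! i) \<and> \<not> sig_eq (As ! i) sig_zero \<and> rho_rel (As ! i) (bs ! i)"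
      using rho_sum(2) by blast
    have "rho_rel X (ord_sum (map ord_omexp bs))"
      by (rule rho_rel.rho_sum[OF rho_sum(1) r rho_sum(3)])
    moreover have "fst X = 1" using rho_one by (simp add: one_sig_eq)
    ultimately show ?thesis using rho_rel_one rho_one by blast
  next
    case (rho_sum As' bs')
    have pos': "\<forall>A\<in>set As'. 0 < fst A" using rho_sum(3) by (rule pos_of)
    have ee: "sig_eq (sig_sum (map sig_exp As)) (sig_sum (map sig_exp As'))"
      using sig_eq_trans[OF sig_eq_sym[OF O(3)] rho_sum(4)] .
    have u: "length As = length As' \<and> (\<forall>i<length As. sig_eq (As ! i) (As' ! i))"
      using sum_exp_unique[OF pos pos' ee] .
    have "bs = bs'"
    proof (rule nth_equalityI)
      show "length bs = length bs'" using u O(1) rho_sum(2) by simp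
      fix i assume i: "i < length bs"
      have i1: "i < length As" using i O(1) by simp
      have "rho_rel (As' ! i) (bs' ! i)" using rho_sum(3) i1 u by simp
      then have "rho_rel (As ! i) (bs' ! i)" using u i1 rho_rel_cong sig_eq_sym by blast
      then show "bs ! i = bs' ! i" using O(2) i1 by blast
    qed
    then show ?thesis using rho_sum by simp
  qed
qed

lemma rho_eq: "rho_rel X a \<Longrightarrow> rho X = a"
  unfolding rho_def using rho_rel_unique by blast

lemma BB_rho_ex: "BB X \<Longrightarrow> \<exists>a. rho_rel X a"
proof (induct rule: BB.induct)
  case (BB_zero X) then show ?case using rho_rel.rho_zero by blast
next
  case (BB_one X) then show ?case using rho_rel.rho_one by blast
next
  case (BB_sum Xs X)
  define Ys where "Ys = filter (\<lambda>A. 0 < fst A) Xs"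
  have Ys: "\<forall>Y\<in>set Ys. BB Y \<and> (\<exists>a. rho_rel Y a) \<and> 0 < fst Y"
    unfolding Ys_def using BB_sum(1) by (metis (no_types, lifting) in_set_conv_nth mem_Collect_eq set_filter)
  define bs where "bs = map (\<lambda>Y. SOME a. rho_rel Y a) Ys"
  have "rho_rel X (ord_sum (map ord_omexp bs))"
  proof (rule rho_rel.rho_sum)
    show "length Ys = length bs" by (simp add: bs_def)
    show "\<forall>i<length Ys. BB (Ys ! i) \<and> \<not> sig_eq (Ys ! i) sig_zero \<and> rho_rel (Ys ! i) (bs ! i)"
    proof (intro allI impI conjI)
      fix i assume i: "i < length Ys"
      then have Y: "BB (Ys ! i) \<and> (\<exists>a. rho_rel (Ys ! i) a) \<and> 0 < fst (Ys ! i)" using Ys nth_mem by blast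
      then show "BB (Ys ! i)" by blast
      show "\<not> sig_eq (Ys ! i) sig_zero" using Y by (simp add: zero_sig_eq)
      show "rho_rel (Ys ! i) (bs ! i)" using Y i unfolding bs_def by (simp add: someI_ex)
    qed
    show "sig_eq X (sig_sum (map sig_exp Ys))"
      using BB_sum(2) sig_sum_drop_zero Ys_def sig_eq_trans by blast
  qed
  then show ?case by blast
qed

lemma RR_BB: "RR X \<Longrightarrow> BB X"
  by (induct rule: RR.induct) (auto intro: BB.intros)

lemma rho_of: "BB X \<Longrightarrow> rho_rel X (rho X)"
  using BB_rho_ex rho_eq by metis

lemma rho_zero_sig: "fst X = 0 \<Longrightarrow> rho X = ord_zero"
  by (rule rho_eq, rule rho_rel.rho_zero) (simp add: zero_sig_eq)

lemma rho_one_sig: "fst X = 1 \<Longrightarrow> rho X = ord_one"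
  by (rule rho_eq, rule rho_rel.rho_one) (simp add: one_sig_eq)

lemma lt_Nil[simp]: "\<not> ord_lt a (C [])"
proof (cases a)
  case (C xs) then show ?thesis by (cases xs) auto
qed
lemma Nil_lt[simp]: "ord_lt (C []) (C (y # ys))" by simp

lemma lt_irrefl_list: "(\<forall>x\<in>set xs. \<not> ord_lt x x) \<Longrightarrow> \<not> ord_lt (C xs) (C xs)"
  by (induct xs) auto

lemma lt_irrefl[simp]: "\<not> ord_lt a a"
proof (induct a)
  case (C xs) then show ?case using lt_irrefl_list by blast
qed

lemma lt_trans_list:
  "(\<forall>x\<in>set xs. \<forall>y z. ord_lt x y \<longrightarrow> ord_lt y z \<longrightarrow> ord_lt x z) \<Longrightarrow>
   ord_lt (C xs) (C ys) \<Longrightarrow> ord_lt (C ys) (C zs) \<Longrightarrow> ord_lt (C xs) (C zs)"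
proof (induct xs arbitrary: ys zs)
  case Nil then show ?case by (cases ys; cases zs) auto
next
  case (Cons x xs)
  obtain y ys' where ys: "ys = y # ys'" using Cons(3) by (cases ys) auto
  obtain z zs' where zs: "zs = z # zs'" using Cons(4) ys by (cases zs) auto
  have xt: "\<forall>y z. ord_lt x y \<longrightarrow> ord_lt y z \<longrightarrow> ord_lt x z" using Cons(2) by simp
  have ih: "ord_lt (C xs) (C ys') \<Longrightarrow> ord_lt (C ys') (C zs') \<Longrightarrow> ord_lt (C xs) (C zs')"
    using Cons(1) Cons(2) by simp
  show ?case using Cons(3,4) ys zs xt ih by auto
qed

lemma lt_trans: "ord_lt a b \<Longrightarrow> ord_lt b c \<Longrightarrow> ord_lt a c"
proof (induct a arbitrary: b c)
  case (C xs)
  obtain ys where b: "b = C ys" by (cases b)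
  obtain zs where c: "c = C zs" by (cases c)
  show ?case using lt_trans_list[of xs ys zs] C b c by blast
qed

lemma lt_asym: "ord_lt a b \<Longrightarrow> \<not> ord_lt b a" using lt_trans lt_irrefl by blast

lemma le_refl[simp]: "ord_le a a" by (simp add: ord_le_def)
lemma lt_imp_le: "ord_lt a b \<Longrightarrow> ord_le a b" by (simp add: ord_le_def)
lemma le_trans: "ord_le a b \<Longrightarrow> ord_le b c \<Longrightarrow> ord_le a c"
  unfolding ord_le_def using lt_trans by blast
lemma le_lt_trans: "ord_le a b \<Longrightarrow> ord_lt b c \<Longrightarrow> ord_lt a c"
  unfolding ord_le_def using lt_trans by blast
lemma lt_le_trans: "ord_lt a b \<Longrightarrow> ord_le b c \<Longrightarrow> ord_lt a c"
  unfolding ord_le_def using lt_trans by blast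
lemma le_Nil: "ord_le (C []) a"
proof (cases a)
  case (C xs) then show ?thesis by (cases xs) (auto simp: ord_le_def)
qed
lemma le_Nil_iff: "ord_le a (C []) \<longleftrightarrow> a = C []" by (simp add: ord_le_def)

lemma lex_elim:
  "ord_lt (C as) (C cs) \<Longrightarrow> \<exists>k < length cs. take k as = take k cs \<and>
     (length as = k \<or> (k < length as \<and> ord_lt (as ! k) (cs ! k)))"
proof (induct as arbitrary: cs)
  case Nil then show ?case by (cases cs) auto
next
  case (Cons a as)
  obtain c cs' where cs: "cs = c # cs'" using Cons(2) by (cases cs) auto
  show ?case
  proof (cases "ord_lt a c")
    case True then show ?thesis using cs by (intro exI[of _ 0]) auto
  next
    case False
    then have "a = c" "ord_lt (C as) (C cs')" using Cons(2) cs by auto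
    then obtain k where "k < length cs'" "take k as = take k cs'"
      "length as = k \<or> (k < length as \<and> ord_lt (as ! k) (cs' ! k))" using Cons(1) by blast
    then show ?thesis using cs \<open>a = c\<close> by (intro exI[of _ "Suc k"]) auto
  qed
qed

lemma prefix_lt: "ord_lt (C xs) (C (xs @ y # ys))"
  by (induct xs) auto

definition allz :: "cnf list \<Rightarrow> bool" where "allz xs \<longleftrightarrow> (\<forall>x\<in>set xs. x = C [])"

lemma allz_rep: "allz xs \<Longrightarrow> xs = replicate (length xs) (C [])"
  unfolding allz_def by (simp add: replicate_length_same)

lemma allz_lt: "allz xs \<Longrightarrow> allz ys \<Longrightarrow> length xs < length ys \<Longrightarrow> ord_lt (C xs) (C ys)"
proof -
  assume a: "allz xs" "allz ys" "length xs < length ys"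
  have "length ys = length xs + Suc (length ys - length xs - 1)" using a(3) by simp
  then have "replicate (length ys) (C []) = replicate (length xs) (C []) @ replicate (Suc (length ys - length xs - 1)) (C [])"
    by (metis replicate_add)
  then have "ys = xs @ C [] # replicate (length ys - length xs - 1) (C [])"
    using allz_rep[OF a(1)] allz_rep[OF a(2)] by simp
  then show ?thesis using prefix_lt by metis
qed

lemma lt_allz: "ord_lt (C xs) (C ys) \<Longrightarrow> allz ys \<Longrightarrow> allz xs \<and> length xs < length ys"
proof -
  assume lt: "ord_lt (C xs) (C ys)" and z: "allz ys"
  obtain k where k: "k < length ys" "take k xs = take k ys"
      "length xs = k \<or> (k < length xs \<and> ord_lt (xs ! k) (ys ! k))" using lex_elim[OF lt] by blast
  have "ys ! k = C []" using z k(1) unfolding allz_def by simp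
  then have "length xs = k" using k(3) by auto
  then have "xs = take k ys" using k(2) by (metis take_all order_refl)
  then show ?thesis using z k(1) \<open>length xs = k\<close> unfolding allz_def by (auto dest: in_set_takeD)
qed

lemma le_allz: "ord_le (C xs) (C ys) \<Longrightarrow> allz ys \<Longrightarrow> allz xs \<and> length xs \<le> length ys"
  unfolding ord_le_def using lt_allz by fastforce


lemma minus1_C: "ord_minus1 (C xs) = (if xs \<noteq> [] \<and> allz xs then C (tl xs) else C xs)"
  by (simp add: ord_minus1_def allz_def)

lemma allz_tl: "allz xs \<Longrightarrow> allz (tl xs)" unfolding allz_def by (cases xs) auto

lemma minus1_mono: "ord_le a b \<Longrightarrow> ord_le (ord_minus1 a) (ord_minus1 b)"
proof -
  assume ab: "ord_le a b"
  obtain xs where a: "a = C xs" by (cases a)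
  obtain ys where b: "b = C ys" by (cases b)
  show ?thesis
  proof (cases "xs \<noteq> [] \<and> allz xs")
    case True
    show ?thesis
    proof (cases "ys \<noteq> [] \<and> allz ys")
      case True2: True
      have "length xs \<le> length ys" using le_allz[of xs ys] ab a b True2 by blast
      then have "length (tl xs) \<le> length (tl ys)" by simp
      then have "ord_le (C (tl xs)) (C (tl ys))"
        using allz_lt[of "tl xs" "tl ys"] allz_tl True True2
        by (metis allz_rep le_neq_implies_less ord_le_def)
      then show ?thesis using True True2 a b by (simp add: minus1_C)
    next
      case False
      have "ord_lt (C (tl xs)) (C xs)"
        using prefix_lt[of "tl xs" "hd xs" "[]"] True allz_rep[OF allz_tl[of xs]] True
        by (metis allz_lt allz_tl diff_less length_greater_0_conv length_tl zero_less_one)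
      then have "ord_le (C (tl xs)) (C ys)" using ab a b lt_le_trans lt_imp_le by blast
      then show ?thesis using True False a b by (auto simp: minus1_C)
    qed
  next
    case False
    show ?thesis
    proof (cases "ys \<noteq> [] \<and> allz ys")
      case True
      then have "allz xs" using le_allz[of xs ys] ab a b by blast
      then have "xs = []" using False by simp
      then show ?thesis using a b by (simp add: minus1_C le_Nil)
    next
      case False2: False
      then show ?thesis using False a b ab by (auto simp: minus1_C)
    qed
  qed
qed

lemma sorted_wrt_tl': "sorted_wrt R xs \<Longrightarrow> sorted_wrt R (tl xs)"
  by (cases xs) auto

lemma minus1_valid: "ord_valid a \<Longrightarrow> ord_valid (ord_minus1 a)"
proof -
  assume v: "ord_valid a"
  obtain xs where a: "a = C xs" by (cases a)
  show ?thesis using v a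
    by (auto simp: minus1_C sorted_wrt_tl' dest: list.set_sel(2))
qed

definition ord_op :: "cnf \<Rightarrow> cnf" where
  "ord_op a = (case a of C xs \<Rightarrow> if allz xs then C (C [] # xs) else C xs)"

lemma op_C: "ord_op (C xs) = (if allz xs then C (C [] # xs) else C xs)"
  by (simp add: ord_op_def)

lemma op_minus1: "ord_minus1 (ord_op a) = a"
proof (cases a)
  case (C xs) then show ?thesis by (auto simp: op_C minus1_C allz_def)
qed

lemma op_nonzero: "ord_op a \<noteq> ord_zero"
proof (cases a)
  case (C xs) then show ?thesis by (cases xs) (auto simp: op_C ord_zero_def allz_def)
qed

lemma op_valid: "ord_valid a \<Longrightarrow> ord_valid (ord_op a)"
proof (cases a)
  case (C xs)
  assume "ord_valid a"
  then show ?thesis using C by (auto simp: op_C allz_def ord_le_def)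
qed

lemma valid_hd_nonzero:
  assumes "ord_valid (C ys)" "ys \<noteq> []" "\<not> allz ys"
  shows "ord_lt (C []) (hd ys)"
proof -
  obtain y ys' where ys: "ys = y # ys'" using assms(2) by (cases ys) auto
  have "y \<noteq> C []"
  proof
    assume y: "y = C []"
    then have "\<forall>z\<in>set ys'. ord_le z (C [])" using assms(1) ys by simp
    then have "allz ys" using y ys by (auto simp: allz_def le_Nil_iff)
    then show False using assms(3) by simp
  qed
  then obtain z zs where "y = C (z # zs)" by (metis cnf.exhaust list.exhaust)
  then show ?thesis using ys by simp
qed

lemma allz_Cons_lt: "allz xs \<Longrightarrow> ord_lt (C []) y \<Longrightarrow> ord_lt (C (C [] # xs)) (C (y # ys))"
  by simp

lemma op_lt: "ord_lt a (ord_minus1 b) \<Longrightarrow> ord_valid b \<Longrightarrow> ord_lt (ord_op a) b"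
proof -
  assume lt: "ord_lt a (ord_minus1 b)" and v: "ord_valid b"
  obtain xs where a: "a = C xs" by (cases a)
  obtain ys where b: "b = C ys" by (cases b)
  show ?thesis
  proof (cases "ys \<noteq> [] \<and> allz ys")
    case True
    then have lt2: "ord_lt (C xs) (C (tl ys))" using lt a b by (simp add: minus1_C)
    then have "allz xs" "length xs < length (tl ys)" using lt_allz allz_tl True by blast+
    then have "ord_lt (C (C [] # xs)) (C ys)"
      using allz_lt[of "C [] # xs" ys] True by (auto simp: allz_def)
    then show ?thesis using a b \<open>allz xs\<close> by (simp add: op_C)
  next
    case False
    then have lt2: "ord_lt (C xs) (C ys)" using lt a b by (auto simp: minus1_C)
    then have ne: "ys \<noteq> []" by auto
    then have nz: "\<not> allz ys" using False by simp
    show ?thesis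
    proof (cases "allz xs")
      case True
      have "ord_lt (C []) (hd ys)" using valid_hd_nonzero v b ne nz by blast
      then have "ord_lt (C (C [] # xs)) (C ys)" using ne by (cases ys) auto
      then show ?thesis using a b True by (simp add: op_C)
    next
      case False
      then show ?thesis using a lt2 b by (simp add: op_C)
    qed
  qed
qed

lemma op_mono: "ord_le a b \<Longrightarrow> ord_valid b \<Longrightarrow> ord_le (ord_op a) (ord_op b)"
proof -
  assume le: "ord_le a b" and v: "ord_valid b"
  obtain xs where a: "a = C xs" by (cases a)
  obtain ys where b: "b = C ys" by (cases b)
  show ?thesis
  proof (cases "allz ys")
    case True
    then have "allz xs" "length xs \<le> length ys" using le_allz le a b by blast+
    then show ?thesis using True a b allz_lt[of "C [] # xs" "C [] # ys"]
      by (cases "length xs = length ys") (auto simp: op_C ord_le_def allz_def dest: allz_rep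
          intro: allz_rep, metis allz_def allz_rep)
  next
    case False
    then have ne: "ys \<noteq> []" by (auto simp: allz_def)
    show ?thesis
    proof (cases "allz xs")
      case True
      have "ord_lt (C []) (hd ys)" using valid_hd_nonzero v b ne False by blast
      then have "ord_lt (C (C [] # xs)) (C ys)" using ne by (cases ys) auto
      then show ?thesis using a b True False by (simp add: op_C ord_le_def)
    next
      case False2: False
      then show ?thesis using a b False le by (simp add: op_C)
    qed
  qed
qed


lemma omexp_nz: "b \<noteq> ord_zero \<Longrightarrow> ord_omexp b = C [ord_minus1 b]"
  by (simp add: ord_omexp_def)

lemma ord_sum_omexp:
  "(\<forall>b\<in>set bs. b \<noteq> ord_zero) \<Longrightarrow> sorted_wrt (\<lambda>x y. ord_le y x) (map ord_minus1 bs) \<Longrightarrow>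
   ord_sum (map ord_omexp bs) = C (map ord_minus1 bs)"
proof (induct bs rule: rev_induct)
  case Nil then show ?case by (simp add: ord_sum_def ord_zero_def)
next
  case (snoc b bs)
  have ih: "ord_sum (map ord_omexp bs) = C (map ord_minus1 bs)"
    using snoc by (simp add: sorted_wrt_append)
  have all: "\<forall>x\<in>set (map ord_minus1 bs). ord_le (ord_minus1 b) x"
    using snoc(3) by (simp add: sorted_wrt_append)
  have "ord_sum (map ord_omexp (bs @ [b])) = ord_add (ord_sum (map ord_omexp bs)) (C [ord_minus1 b])"
    using snoc(2) by (simp add: ord_sum_def omexp_nz)
  also have "\<dots> = C (map ord_minus1 bs @ [ord_minus1 b])"
    using ih all by (simp add: filter_id_conv)
  finally show ?case by simp
qed

lemma ord_sum_nonzero: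
  "bs \<noteq> [] \<Longrightarrow> (\<forall>b\<in>set bs. b \<noteq> ord_zero) \<Longrightarrow> ord_sum (map ord_omexp bs) \<noteq> ord_zero"
proof (induct bs rule: rev_induct)
  case Nil then show ?case by simp
next
  case (snoc b bs)
  obtain xs where "foldl ord_add ord_zero (map ord_omexp bs) = C xs" by (metis cnf.exhaust)
  then show ?case using snoc(3) by (simp add: ord_sum_def omexp_nz ord_zero_def)
qed

lemma rho_rel_nonzero: "rho_rel X a \<Longrightarrow> 0 < fst X \<Longrightarrow> a \<noteq> ord_zero"
proof (induct rule: rho_rel.induct)
  case (rho_zero X) then show ?case by (simp add: zero_sig_eq)
next
  case (rho_one X) then show ?case by (simp add: ord_one_def ord_zero_def)
next
  case (rho_sum As bs X)
  have pos: "\<forall>A\<in>set As. 0 < fst A" using rho_sum(2) by (rule pos_of)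
  have "0 < sum_list (map fst As)" using sig_eq_fst[OF rho_sum(3)] rho_sum(4)
    by (simp add: sig_sum_fst o_def)
  then have ne: "As \<noteq> []" by auto
  have "\<forall>b\<in>set bs. b \<noteq> ord_zero"
  proof
    fix b assume "b \<in> set bs"
    then obtain i where i: "i < length bs" "b = bs ! i" by (auto simp: in_set_conv_nth)
    then have i2: "i < length As" using rho_sum(1) by simp
    then have "0 < fst (As ! i)" using pos nth_mem by blast
    moreover have "0 < fst (As ! i) \<longrightarrow> bs ! i \<noteq> ord_zero" using rho_sum(2) i2 by blast
    ultimately show "b \<noteq> ord_zero" using i by simp
  qed
  moreover have "bs \<noteq> []" using ne rho_sum(1) by auto
  ultimately show ?case using ord_sum_nonzero by blast
qed

lemma rho_nonzero: "BB X \<Longrightarrow> 0 < fst X \<Longrightarrow> rho X \<noteq> ord_zero"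
  using rho_of rho_rel_nonzero by blast

lemma rho_zero_iff: "BB X \<Longrightarrow> rho X = ord_zero \<longleftrightarrow> fst X = 0"
  using rho_nonzero rho_zero_sig by blast

lemma rho_cong: "BB X \<Longrightarrow> sig_eq X Y \<Longrightarrow> rho Y = rho X"
  using rho_of rho_rel_cong rho_eq by blast

definition RL :: "sig \<Rightarrow> sig \<Rightarrow> bool" where "RL x y \<longleftrightarrow> ord_le (rho y) (rho x)"

lemma RL_trans: "transp RL" unfolding transp_def RL_def using le_trans by blast

lemma sorted_minus1: "sorted_wrt RL Zs \<Longrightarrow> sorted_wrt (\<lambda>x y. ord_le y x) (map (ord_minus1 \<circ> rho) Zs)"
  unfolding sorted_wrt_map
  by (rule sorted_wrt_mono_rel[of _ RL]) (auto simp: RL_def minus1_mono)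

lemma RR_sum_sorted:
  assumes "\<forall>Z\<in>set Zs. RR Z" "sorted_wrt RL Zs"
  shows "RR (sig_sum (map sig_exp Zs))"
proof (rule RR.RR_sum[of Zs])
  show "\<forall>i<length Zs. RR (Zs ! i)" using assms(1) by simp
  show "\<forall>i. Suc i < length Zs \<longrightarrow> ord_le (rho (Zs ! Suc i)) (rho (Zs ! i))"
    using assms(2) sorted_wrt_nth_less[of RL Zs] unfolding RL_def by auto
qed simp

lemma rho_sum_sorted:
  assumes "\<forall>Z\<in>set Zs. BB Z \<and> 0 < fst Z" "sorted_wrt RL Zs"
  shows "rho (sig_sum (map sig_exp Zs)) = C (map (ord_minus1 \<circ> rho) Zs)"
proof -
  have "rho_rel (sig_sum (map sig_exp Zs)) (ord_sum (map ord_omexp (map rho Zs)))"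
  proof (rule rho_rel.rho_sum)
    show "length Zs = length (map rho Zs)" by simp
    show "\<forall>i<length Zs. BB (Zs ! i) \<and> \<not> sig_eq (Zs ! i) sig_zero \<and> rho_rel (Zs ! i) (map rho Zs ! i)"
      using assms(1) nth_mem by (auto simp: zero_sig_eq intro!: rho_of)
  qed simp
  moreover have "ord_sum (map ord_omexp (map rho Zs)) = C (map ord_minus1 (map rho Zs))"
  proof (rule ord_sum_omexp)
    show "\<forall>b\<in>set (map rho Zs). b \<noteq> ord_zero" using assms(1) rho_nonzero by auto
    show "sorted_wrt (\<lambda>x y. ord_le y x) (map ord_minus1 (map rho Zs))"
      using sorted_minus1[OF assms(2)] by (simp add: o_def)
  qed
  ultimately show ?thesis using rho_eq by simp
qed

lemma valid_sum:
  assumes "\<forall>Z\<in>set Zs. ord_valid (rho Z)" "sorted_wrt RL Zs"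
  shows "ord_valid (C (map (ord_minus1 \<circ> rho) Zs))"
  using assms sorted_minus1[OF assms(2)] by (auto simp: minus1_valid)

lemma RR_sorted_filter:
  assumes "\<forall>i. Suc i < length Xs \<longrightarrow> ord_le (rho (Xs ! Suc i)) (rho (Xs ! i))"
  shows "sorted_wrt RL (filter P Xs)"
proof -
  have "sorted_wrt RL Xs" using sorted_wrt_iff_nth_Suc_transp[OF RL_trans] assms
    unfolding RL_def by simp
  then show ?thesis by (simp add: sorted_wrt_filter)
qed

lemma RR_valid: "RR X \<Longrightarrow> ord_valid (rho X)"
proof (induct rule: RR.induct)
  case (RR_zero X) then show ?case by (simp add: rho_zero_sig zero_sig_eq ord_zero_def)
next
  case (RR_one X) then show ?case by (simp add: rho_one_sig one_sig_eq ord_one_def)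
next
  case (RR_sum Xs X)
  define Ys where "Ys = filter (\<lambda>A. 0 < fst A) Xs"
  have Ys: "\<forall>Y\<in>set Ys. RR Y \<and> ord_valid (rho Y) \<and> 0 < fst Y"
    unfolding Ys_def using RR_sum(1) by (metis (no_types, lifting) in_set_conv_nth mem_Collect_eq set_filter)
  have s: "sorted_wrt RL Ys" unfolding Ys_def by (rule RR_sorted_filter[OF RR_sum(2)])
  have e: "sig_eq X (sig_sum (map sig_exp Ys))" unfolding Ys_def
    using RR_sum(3) sig_sum_drop_zero sig_eq_trans by blast
  have "BB X" using RR_BB RR.RR_sum[OF _ RR_sum(2,3)] RR_sum(1) by blast
  then have "rho X = rho (sig_sum (map sig_exp Ys))" using rho_cong e by metis
  also have "\<dots> = C (map (ord_minus1 \<circ> rho) Ys)"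
    using rho_sum_sorted s Ys RR_BB by blast
  finally have r: "rho X = C (map (ord_minus1 \<circ> rho) Ys)" .
  have v: "\<forall>Y\<in>set Ys. ord_valid (rho Y)" using Ys by blast
  show ?case unfolding r by (rule valid_sum[OF v s])
qed

lemma LE_zero_base: "LE A B \<Longrightarrow> fst B = 0 \<Longrightarrow> fst A = 0"
proof -
  assume "LE A B" "fst B = 0"
  then obtain A1 where e: "sig_eq A A1" and l: "sig_step\<^sup>*\<^sup>* B A1" unfolding LE_def sig_le_def by blast
  from l have "A1 = B"
  proof (cases rule: converse_rtranclpE)
    case (step z) then show ?thesis using \<open>fst B = 0\<close> unfolding sig_step_def by simp
  qed simp
  then show ?thesis using e \<open>fst B = 0\<close> sig_eq_fst by metis
qed

lemma LE_plus_left: "LE A (sig_plus A B)"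
proof -
  have "LE (pre (fst A) (sig_plus A B)) (sig_plus A B)" by (rule LE_pre) simp
  then show ?thesis using sig_eq_sym[OF pre_plus] LE_eq_trans by blast
qed

lemma copies_one: "sig_eq (copies 1 Q) Q"
  by (simp add: copies_def sig_sum_Cons sig_sum_Nil plus_zero_r)

lemma copies_le: "k \<le> N \<Longrightarrow> LE (copies k Q) (copies N Q)"
proof -
  assume k: "k \<le> N"
  have "sig_eq (copies N Q) (sig_plus (copies k Q) (copies (N - k) Q))"
    using copies_add[of k "N - k" Q] k by simp
  then show ?thesis using LE_plus_left LE_trans_eq sig_eq_sym by blast
qed

definition Fprop :: "sig \<Rightarrow> bool" where
  "Fprop X \<longleftrightarrow> (\<forall>S. finite S \<longrightarrow> (\<forall>\<alpha>\<in>S. ord_valid \<alpha> \<and> ord_lt \<alpha> (rho X)) \<longrightarrow> 0 < fst X \<longrightarrow>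
     (\<exists>W T. 0 < fst T \<and> LE (sig_plus W T) X \<and> (\<forall>\<alpha>\<in>S. \<exists>A. RR A \<and> rho A = \<alpha> \<and> LE A W)))"

lemma H_lemma:
  assumes F: "Fprop Y" and RY: "RR Y" and Y0: "0 < fst Y" and fin: "finite G"
    and G: "\<forall>\<gamma>\<in>G. ord_valid (C \<gamma>) \<and> (\<forall>a\<in>set \<gamma>. ord_lt a (ord_minus1 (rho Y)))"
  shows "\<exists>W T. 0 < fst T \<and> LE (sig_plus W T) (sig_exp Y) \<and>
    (\<forall>\<gamma>\<in>G. \<exists>Zs. (\<forall>Z\<in>set Zs. RR Z) \<and> map rho Zs = map ord_op \<gamma> \<and> LE (sig_sum (map sig_exp Zs)) W)"
proof -
  define E where "E = (\<Union>\<gamma>\<in>G. set \<gamma>)"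
  have finE: "finite E" unfolding E_def using fin by simp
  show ?thesis
  proof (cases "E = {}")
    case True
    have "LE (sig_plus sig_zero (sig_exp Y)) (sig_exp Y)" by (rule LE_eq, rule plus_zero_l) simp
    moreover have "\<forall>\<gamma>\<in>G. \<exists>Zs. (\<forall>Z\<in>set Zs. RR Z) \<and> map rho Zs = map ord_op \<gamma> \<and> LE (sig_sum (map sig_exp Zs)) sig_zero"
    proof
      fix \<gamma> assume "\<gamma> \<in> G"
      then have "\<gamma> = []" using True unfolding E_def by auto
      then show "\<exists>Zs. (\<forall>Z\<in>set Zs. RR Z) \<and> map rho Zs = map ord_op \<gamma> \<and> LE (sig_sum (map sig_exp Zs)) sig_zero"
        by (intro exI[of _ "[]"]) (simp add: sig_sum_Nil)
    qed
    ultimately show ?thesis using Y0 by (intro exI[of _ sig_zero] exI[of _ "sig_exp Y"]) simp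
  next
    case False
    have vY: "ord_valid (rho Y)" using RR_valid RY by blast
    have Ev: "\<forall>a\<in>E. ord_valid a \<and> ord_lt a (ord_minus1 (rho Y))"
      using G unfolding E_def by auto
    define S where "S = ord_op ` E"
    have S: "\<forall>\<alpha>\<in>S. ord_valid \<alpha> \<and> ord_lt \<alpha> (rho Y)"
    proof
      fix \<alpha> assume "\<alpha> \<in> S"
      then obtain a where a: "a \<in> E" "\<alpha> = ord_op a" unfolding S_def by blast
      have "ord_valid a" "ord_lt a (ord_minus1 (rho Y))" using Ev a(1) by auto
      then show "ord_valid \<alpha> \<and> ord_lt \<alpha> (rho Y)" using a(2) op_valid op_lt[OF _ vY] by simp
    qed
    have finS: "finite S" unfolding S_def using finE by simp
    obtain W' T' where T': "0 < fst T'" and WT': "LE (sig_plus W' T') Y"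
      and Zex: "\<forall>\<alpha>\<in>S. \<exists>A. RR A \<and> rho A = \<alpha> \<and> LE A W'"
      using F finS S Y0 unfolding Fprop_def by blast
    define Zf where "Zf = (\<lambda>a. SOME A. RR A \<and> rho A = ord_op a \<and> LE A W')"
    have Zf: "RR (Zf a) \<and> rho (Zf a) = ord_op a \<and> LE (Zf a) W'" if "a \<in> E" for a
    proof -
      have "ord_op a \<in> S" unfolding S_def using that by blast
      then have "\<exists>A. RR A \<and> rho A = ord_op a \<and> LE A W'" using Zex by blast
      then show ?thesis unfolding Zf_def by (rule someI_ex)
    qed
    obtain a0 where a0: "a0 \<in> E" using False by blast
    have "fst (Zf a0) \<noteq> 0"
    proof
      assume "fst (Zf a0) = 0"
      then have "rho (Zf a0) = ord_zero" by (rule rho_zero_sig)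
      then show False using Zf[OF a0] op_nonzero by simp
    qed
    moreover have l: "LE (Zf a0) W'" using Zf[OF a0] by blast
    ultimately have W'0: "0 < fst W'" using LE_zero_base[OF l] by (cases "fst W'") auto
    define Q where "Q = sig_exp W'"
    define N where "N = Max (length ` G)"
    have "sig_eq (sig_plus (copies N Q) Q) (sig_plus (copies N Q) (copies 1 Q))"
      by (rule plus_cong[OF sig_eq_refl sig_eq_sym[OF copies_one]])
    also have "sig_eq \<dots> (copies (N + 1) Q)" by (rule sig_eq_sym[OF copies_add])
    also have "LE (copies (N + 1) Q) (glue Q (sig_exp T'))" by (rule copies_le_glue[OF T'])
    also have "sig_eq (glue Q (sig_exp T')) (sig_exp (sig_plus W' T'))"
      unfolding Q_def by (rule sig_eq_sym[OF exp_plus_glue])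
    also have "LE (sig_exp (sig_plus W' T')) (sig_exp Y)" by (rule LE_exp[OF WT'])
    finally have le1: "LE (sig_plus (copies N Q) Q) (sig_exp Y)" .
    have "\<forall>\<gamma>\<in>G. \<exists>Zs. (\<forall>Z\<in>set Zs. RR Z) \<and> map rho Zs = map ord_op \<gamma> \<and> LE (sig_sum (map sig_exp Zs)) (copies N Q)"
    proof
      fix \<gamma> assume g: "\<gamma> \<in> G"
      then have gE: "set \<gamma> \<subseteq> E" unfolding E_def by auto
      define Zs where "Zs = map Zf \<gamma>"
      have "list_all2 LE (map sig_exp Zs) (replicate (length \<gamma>) Q)"
        unfolding list_all2_conv_all_nth
      proof (intro conjI allI impI)
        show "length (map sig_exp Zs) = length (replicate (length \<gamma>) Q)" by (simp add: Zs_def)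
        fix i assume "i < length (map sig_exp Zs)"
        then have i: "i < length \<gamma>" by (simp add: Zs_def)
        then have "\<gamma> ! i \<in> E" using gE nth_mem by blast
        then have "LE (Zf (\<gamma> ! i)) W'" using Zf by blast
        then show "LE (map sig_exp Zs ! i) (replicate (length \<gamma>) Q ! i)"
          using i by (simp add: Zs_def Q_def LE_exp)
      qed
      then have "LE (sig_sum (map sig_exp Zs)) (copies (length \<gamma>) Q)"
        unfolding copies_def by (rule LE_sum)
      also have "LE (copies (length \<gamma>) Q) (copies N Q)"
        by (rule copies_le) (use fin g in \<open>simp add: N_def\<close>)
      finally have "LE (sig_sum (map sig_exp Zs)) (copies N Q)" .
      moreover have "\<forall>Z\<in>set Zs. RR Z" unfolding Zs_def using gE Zf by auto
      moreover have "map rho Zs = map ord_op \<gamma>" unfolding Zs_def using gE Zf by auto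
      ultimately show "\<exists>Zs. (\<forall>Z\<in>set Zs. RR Z) \<and> map rho Zs = map ord_op \<gamma> \<and> LE (sig_sum (map sig_exp Zs)) (copies N Q)"
        by blast
    qed
    moreover have "0 < fst Q" using W'0 by (simp add: Q_def)
    ultimately show ?thesis using le1 by (intro exI[of _ "copies N Q"] exI[of _ Q]) simp
  qed
qed

lemma decomp:
  assumes v: "ord_valid (C as)" and lt: "ord_lt (C as) (C cs)"
  shows "\<exists>k<length cs. C as = C (take k cs @ drop k as) \<and> ord_valid (C (drop k as)) \<and>
     (\<forall>a\<in>set (drop k as). ord_lt a (cs ! k))"
proof -
  obtain k where k: "k < length cs" "take k as = take k cs"
      "length as = k \<or> (k < length as \<and> ord_lt (as ! k) (cs ! k))" using lex_elim[OF lt] by blast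
  have 1: "C as = C (take k cs @ drop k as)" using k(2) by (metis append_take_drop_id)
  have sv: "sorted_wrt (\<lambda>a b. ord_le b a) as" "\<forall>x\<in>set as. ord_valid x" using v by auto
  have 2: "ord_valid (C (drop k as))" using sv by (auto simp: sorted_wrt_drop dest: in_set_dropD)
  have 3: "\<forall>a\<in>set (drop k as). ord_lt a (cs ! k)"
  proof
    fix a assume a: "a \<in> set (drop k as)"
    then have kl: "k < length as" by (cases "k < length as") auto
    then have lk: "ord_lt (as ! k) (cs ! k)" using k(3) by auto
    obtain j where j: "j < length as - k" "a = drop k as ! j" using a by (metis in_set_conv_nth length_drop)
    then have aj: "a = as ! (k + j)" by simp
    show "ord_lt a (cs ! k)"
    proof (cases "j = 0")
      case True then show ?thesis using aj lk by simp
    next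
      case False
      then have "ord_le (as ! (k + j)) (as ! k)" using sorted_wrt_nth_less[OF sv(1), of k "k+j"] j by simp
      then show ?thesis using aj lk le_lt_trans by blast
    qed
  qed
  show ?thesis using k(1) 1 2 3 by blast
qed

lemma take_split3: "k < K \<Longrightarrow> K \<le> length Ys \<Longrightarrow>
  take K Ys = take k Ys @ Ys ! k # take (K - Suc k) (drop (Suc k) Ys)"
proof -
  assume a: "k < K" "K \<le> length Ys"
  have "take K Ys = take k Ys @ take (K - k) (drop k Ys)" using a take_add[of k "K - k" Ys] by simp
  moreover have "drop k Ys = Ys ! k # drop (Suc k) Ys" using a by (simp add: Cons_nth_drop_Suc)
  moreover have "K - k = Suc (K - Suc k)" using a by simp
  ultimately show ?thesis by simp
qed


lemma sorted_RL_op: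
  assumes "map rho Zs = map ord_op \<gamma>" "ord_valid (C \<gamma>)"
  shows "sorted_wrt RL Zs"
proof -
  have sg: "sorted_wrt (\<lambda>a b. ord_le b a) \<gamma>" "\<forall>x\<in>set \<gamma>. ord_valid x" using assms(2) by auto
  have "sorted_wrt (\<lambda>a b. ord_le (ord_op b) (ord_op a)) \<gamma>"
    by (rule sorted_wrt_mono_rel[OF _ sg(1)]) (use sg(2) op_mono in blast)
  then have "sorted_wrt (\<lambda>a b. ord_le b a) (map ord_op \<gamma>)" by (simp add: sorted_wrt_map)
  then have "sorted_wrt (\<lambda>a b. ord_le b a) (map rho Zs)" using assms(1) by simp
  then show ?thesis unfolding RL_def[abs_def] by (simp add: sorted_wrt_map)
qed

lemma F_step:
  assumes Ys: "\<forall>Y\<in>set Ys. RR Y \<and> Fprop Y \<and> 0 < fst Y" and s: "sorted_wrt RL Ys"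
    and e: "sig_eq X (sig_sum (map sig_exp Ys))"
  shows "Fprop X"
  unfolding Fprop_def
proof (intro allI impI)
  fix S assume fin: "finite S" and Sa: "\<forall>\<alpha>\<in>S. ord_valid \<alpha> \<and> ord_lt \<alpha> (rho X)" and X0: "0 < fst X"
  define n where "n = length Ys"
  define cs where "cs = map (ord_minus1 \<circ> rho) Ys"
  define P where "P = (\<lambda>j. sig_sum (map sig_exp (take j Ys)))"
  have RRs: "RR (sig_sum (map sig_exp Ys))" using RR_sum_sorted Ys s by blast
  have rX: "rho X = C cs"
  proof -
    have "rho X = rho (sig_sum (map sig_exp Ys))"
      using rho_cong[OF RR_BB[OF RRs] sig_eq_sym[OF e]] .
    also have "\<dots> = C cs" unfolding cs_def using rho_sum_sorted s Ys RR_BB by blast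
    finally show ?thesis .
  qed
  have vY: "\<forall>Y\<in>set Ys. ord_valid (rho Y)" using Ys RR_valid by blast
  show "\<exists>W T. 0 < fst T \<and> LE (sig_plus W T) X \<and> (\<forall>\<alpha>\<in>S. \<exists>A. RR A \<and> rho A = \<alpha> \<and> LE A W)"
  proof (cases "S = {}")
    case True
    have "LE (sig_plus sig_zero X) X" by (rule LE_eq, rule plus_zero_l) simp
    then show ?thesis using True X0 by (intro exI[of _ sig_zero] exI[of _ X]) simp
  next
    case Sne: False
    have dec: "\<exists>k<n. \<exists>\<gamma>. \<alpha> = C (take k cs @ \<gamma>) \<and> ord_valid (C \<gamma>) \<and> (\<forall>a\<in>set \<gamma>. ord_lt a (cs ! k))"
      if "\<alpha> \<in> S" for \<alpha>
    proof -
      obtain as where a: "\<alpha> = C as" by (cases \<alpha>)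
      have "ord_valid (C as)" "ord_lt (C as) (C cs)" using Sa that a rX by auto
      then obtain k where k: "k < length cs" "C as = C (take k cs @ drop k as)"
        "ord_valid (C (drop k as))" "\<forall>a\<in>set (drop k as). ord_lt a (cs ! k)"
        using decomp[of as cs] by blast
      have "k < n" using k(1) by (simp add: cs_def n_def)
      then show ?thesis using k(2-4) a by blast
    qed
    define kf where "kf = (\<lambda>\<alpha>. SOME k. k < n \<and> (\<exists>\<gamma>. \<alpha> = C (take k cs @ \<gamma>) \<and> ord_valid (C \<gamma>) \<and> (\<forall>a\<in>set \<gamma>. ord_lt a (cs ! k))))"
    have kf: "kf \<alpha> < n \<and> (\<exists>\<gamma>. \<alpha> = C (take (kf \<alpha>) cs @ \<gamma>) \<and> ord_valid (C \<gamma>) \<and> (\<forall>a\<in>set \<gamma>. ord_lt a (cs ! kf \<alpha>)))"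
      if "\<alpha> \<in> S" for \<alpha>
      unfolding kf_def using dec[OF that] by (rule someI_ex)
    define gf where "gf = (\<lambda>\<alpha>. SOME \<gamma>. \<alpha> = C (take (kf \<alpha>) cs @ \<gamma>) \<and> ord_valid (C \<gamma>) \<and> (\<forall>a\<in>set \<gamma>. ord_lt a (cs ! kf \<alpha>)))"
    have gf: "\<alpha> = C (take (kf \<alpha>) cs @ gf \<alpha>) \<and> ord_valid (C (gf \<alpha>)) \<and> (\<forall>a\<in>set (gf \<alpha>). ord_lt a (cs ! kf \<alpha>))"
      if "\<alpha> \<in> S" for \<alpha>
    proof -
      have ex: "\<exists>\<gamma>. \<alpha> = C (take (kf \<alpha>) cs @ \<gamma>) \<and> ord_valid (C \<gamma>) \<and> (\<forall>a\<in>set \<gamma>. ord_lt a (cs ! kf \<alpha>))"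
        using kf[OF that] by blast
      show ?thesis unfolding gf_def by (rule someI_ex[OF ex])
    qed
    define G where "G = (\<lambda>k. gf ` {\<alpha>\<in>S. kf \<alpha> = k})"
    have Hk: "\<exists>W T. 0 < fst T \<and> LE (sig_plus W T) (sig_exp (Ys ! k)) \<and>
       (\<forall>\<gamma>\<in>G k. \<exists>Zs. (\<forall>Z\<in>set Zs. RR Z) \<and> map rho Zs = map ord_op \<gamma> \<and> LE (sig_sum (map sig_exp Zs)) W)"
      if k: "k < n" for k
    proof (rule H_lemma)
      have Yk: "Ys ! k \<in> set Ys" using k n_def by simp
      show "Fprop (Ys ! k)" "RR (Ys ! k)" "0 < fst (Ys ! k)" using Ys Yk by auto
      show "finite (G k)" unfolding G_def using fin by simp
      show "\<forall>\<gamma>\<in>G k. ord_valid (C \<gamma>) \<and> (\<forall>a\<in>set \<gamma>. ord_lt a (ord_minus1 (rho (Ys ! k))))"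
      proof
        fix \<gamma> assume "\<gamma> \<in> G k"
        then obtain \<alpha> where al: "\<alpha> \<in> S" "kf \<alpha> = k" "\<gamma> = gf \<alpha>" unfolding G_def by blast
        have "cs ! k = ord_minus1 (rho (Ys ! k))" using k by (simp add: cs_def n_def)
        then show "ord_valid (C \<gamma>) \<and> (\<forall>a\<in>set \<gamma>. ord_lt a (ord_minus1 (rho (Ys ! k))))"
          using gf[OF al(1)] al by simp
      qed
    qed
    define Wf where "Wf = (\<lambda>k. SOME W. \<exists>T. 0 < fst T \<and> LE (sig_plus W T) (sig_exp (Ys ! k)) \<and>
       (\<forall>\<gamma>\<in>G k. \<exists>Zs. (\<forall>Z\<in>set Zs. RR Z) \<and> map rho Zs = map ord_op \<gamma> \<and> LE (sig_sum (map sig_exp Zs)) W))"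
    have Wf: "\<exists>T. 0 < fst T \<and> LE (sig_plus (Wf k) T) (sig_exp (Ys ! k)) \<and>
       (\<forall>\<gamma>\<in>G k. \<exists>Zs. (\<forall>Z\<in>set Zs. RR Z) \<and> map rho Zs = map ord_op \<gamma> \<and> LE (sig_sum (map sig_exp Zs)) (Wf k))"
      if "k < n" for k
      unfolding Wf_def using Hk[OF that] by (rule someI_ex)
    define Tf where "Tf = (\<lambda>k. SOME T. 0 < fst T \<and> LE (sig_plus (Wf k) T) (sig_exp (Ys ! k)))"
    have Tf: "0 < fst (Tf k) \<and> LE (sig_plus (Wf k) (Tf k)) (sig_exp (Ys ! k))" if "k < n" for k
    proof -
      have "\<exists>T. 0 < fst T \<and> LE (sig_plus (Wf k) T) (sig_exp (Ys ! k))" using Wf[OF that] by blast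
      then show ?thesis unfolding Tf_def by (rule someI_ex)
    qed
    have WfG: "\<forall>\<gamma>\<in>G k. \<exists>Zs. (\<forall>Z\<in>set Zs. RR Z) \<and> map rho Zs = map ord_op \<gamma> \<and> LE (sig_sum (map sig_exp Zs)) (Wf k)"
      if "k < n" for k using Wf[OF that] by blast
    define K where "K = Max (kf ` S)"
    have KS: "K \<in> kf ` S" unfolding K_def using fin Sne by simp
    have Kn: "K < n" using KS kf by auto
    have kK: "kf \<alpha> \<le> K" if "\<alpha> \<in> S" for \<alpha> unfolding K_def using fin that by simp
    define R where "R = sig_sum (map sig_exp (drop (Suc K) Ys))"
    define W where "W = sig_plus (P K) (Wf K)"
    define T where "T = sig_plus (Tf K) R"
    have T0: "0 < fst T" using Tf[OF Kn] by (simp add: T_def)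
    have LEWT: "LE (sig_plus W T) X"
    proof -
      have "sig_eq (sig_plus W T) (sig_plus (P K) (sig_plus (Wf K) T))"
        unfolding W_def by (rule plus_assoc)
      also have "sig_eq \<dots> (sig_plus (P K) (sig_plus (sig_plus (Wf K) (Tf K)) R))"
        unfolding T_def by (rule plus_cong[OF sig_eq_refl sig_eq_sym[OF plus_assoc]])
      also have "LE \<dots> (sig_plus (P K) (sig_plus (sig_exp (Ys ! K)) R))"
        by (rule LE_plus_l, rule LE_plus_r) (use Tf[OF Kn] in blast)
      also have "sig_plus (P K) (sig_plus (sig_exp (Ys ! K)) R) = sig_plus (P K) (sig_sum (map sig_exp (Ys ! K # drop (Suc K) Ys)))"
        by (simp add: R_def sig_sum_Cons)
      also have "sig_eq \<dots> (sig_sum (map sig_exp (take K Ys @ Ys ! K # drop (Suc K) Ys)))"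
        unfolding P_def using sig_eq_sym[OF sig_sum_append] by simp
      also have "take K Ys @ Ys ! K # drop (Suc K) Ys = Ys"
        by (rule id_take_nth_drop[symmetric]) (use Kn n_def in simp)
      also have "sig_eq (sig_sum (map sig_exp Ys)) X" by (rule sig_eq_sym[OF e])
      finally show ?thesis .
    qed
    have Aex: "\<exists>A. RR A \<and> rho A = \<alpha> \<and> LE A W" if aS: "\<alpha> \<in> S" for \<alpha>
    proof -
      define k where "k = kf \<alpha>"
      define \<gamma> where "\<gamma> = gf \<alpha>"
      have kn: "k < n" using kf[OF aS] k_def by simp
      have kK': "k \<le> K" using kK[OF aS] k_def by simp
      have g: "\<alpha> = C (take k cs @ \<gamma>)" "ord_valid (C \<gamma>)" "\<forall>a\<in>set \<gamma>. ord_lt a (cs ! k)"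
        using gf[OF aS] k_def \<gamma>_def by auto
      have "\<gamma> \<in> G k" unfolding G_def \<gamma>_def k_def using aS by blast
      then obtain Zs where Z: "\<forall>Z\<in>set Zs. RR Z" "map rho Zs = map ord_op \<gamma>"
        "LE (sig_sum (map sig_exp Zs)) (Wf k)" using WfG[OF kn] by blast
      have Zpos: "\<forall>Z\<in>set Zs. 0 < fst Z"
      proof
        fix Z assume "Z \<in> set Zs"
        then have "rho Z \<in> set (map rho Zs)" by simp
        then have "rho Z \<in> set (map ord_op \<gamma>)" using Z(2) by simp
        then obtain a where "rho Z = ord_op a" by auto
        then have "rho Z \<noteq> ord_zero" using op_nonzero by simp
        then show "0 < fst Z" using rho_zero_sig by (cases "fst Z") auto
      qed
      define L where "L = take k Ys @ Zs"
      have csk: "cs ! k = ord_minus1 (rho (Ys ! k))" using kn by (simp add: cs_def n_def)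
      have vk: "ord_valid (rho (Ys ! k))" using vY kn n_def by simp
      have sL: "sorted_wrt RL L"
        unfolding L_def sorted_wrt_append
      proof (intro conjI ballI)
        show "sorted_wrt RL (take k Ys)" using s by (simp add: sorted_wrt_take)
        show "sorted_wrt RL Zs" by (rule sorted_RL_op[OF Z(2) g(2)])
        fix Y Z assume YZ: "Y \<in> set (take k Ys)" "Z \<in> set Zs"
        obtain j where j: "j < k" "Y = Ys ! j" using YZ(1) kn n_def
          by (auto simp: in_set_conv_nth)
        have "RL (Ys ! j) (Ys ! k)" using sorted_wrt_nth_less[OF s, of j k] j kn n_def by simp
        then have le: "ord_le (rho (Ys ! k)) (rho Y)" using j by (simp add: RL_def)
        have "rho Z \<in> set (map rho Zs)" using YZ(2) by simp
        then have "rho Z \<in> set (map ord_op \<gamma>)" using Z(2) by simp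
        then obtain a where a: "a \<in> set \<gamma>" "rho Z = ord_op a" by auto
        have "ord_lt (rho Z) (rho (Ys ! k))" using a g(3) csk op_lt vk by simp
        then show "RL Y Z" using le unfolding RL_def by (meson lt_le_trans lt_imp_le)
      qed
      have LRR: "\<forall>Z\<in>set L. RR Z" unfolding L_def using Ys Z(1) by (auto dest: in_set_takeD)
      have Lpos: "\<forall>Z\<in>set L. BB Z \<and> 0 < fst Z" unfolding L_def using Ys Zpos Z(1) RR_BB
        by (auto dest: in_set_takeD)
      define A where "A = sig_sum (map sig_exp L)"
      have RA: "RR A" unfolding A_def by (rule RR_sum_sorted[OF LRR sL])
      have "rho A = C (map (ord_minus1 \<circ> rho) L)" unfolding A_def by (rule rho_sum_sorted[OF Lpos sL])
      also have "map (ord_minus1 \<circ> rho) L = take k cs @ map ord_minus1 (map rho Zs)"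
        by (simp add: L_def cs_def take_map)
      also have "map ord_minus1 (map rho Zs) = \<gamma>" using Z(2) by (simp add: op_minus1 o_def)
      finally have rA: "rho A = \<alpha>" using g(1) by simp
      have "sig_eq A (sig_plus (P k) (sig_sum (map sig_exp Zs)))"
        unfolding A_def L_def P_def using sig_sum_append by simp
      also have "LE \<dots> (sig_plus (P k) (Wf k))" by (rule LE_plus_l[OF Z(3)])
      finally have A1: "LE A (sig_plus (P k) (Wf k))" .
      have "LE A W"
      proof (cases "k = K")
        case True then show ?thesis using A1 by (simp add: W_def)
      next
        case False
        then have kK2: "k < K" using kK' by simp
        have "LE (sig_plus (P k) (Wf k)) (sig_plus (P k) (sig_plus (Wf k) (Tf k)))"
          by (rule LE_plus_l[OF LE_plus_left])
        also have "LE \<dots> (sig_plus (P k) (sig_exp (Ys ! k)))" by (rule LE_plus_l) (use Tf[OF kn] in blast)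
        also have "LE \<dots> (sig_plus (P k) (sig_plus (sig_exp (Ys ! k)) (sig_sum (map sig_exp (take (K - Suc k) (drop (Suc k) Ys))))))"
          by (rule LE_plus_l[OF LE_plus_left])
        also have "sig_eq \<dots> (P K)"
        proof -
          have "take K Ys = take k Ys @ Ys ! k # take (K - Suc k) (drop (Suc k) Ys)"
            by (rule take_split3[OF kK2]) (use Kn n_def in simp)
          moreover have "sig_eq (sig_plus (sig_sum (map sig_exp (take k Ys))) (sig_sum (sig_exp (Ys ! k) # map sig_exp (take (K - Suc k) (drop (Suc k) Ys)))))
              (sig_sum (map sig_exp (take k Ys) @ sig_exp (Ys ! k) # map sig_exp (take (K - Suc k) (drop (Suc k) Ys))))"
            by (rule sig_eq_sym[OF sig_sum_append])
          ultimately show ?thesis unfolding P_def by (simp add: sig_sum_Cons)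
        qed
        also have "LE (P K) W" unfolding W_def by (rule LE_plus_left)
        finally show ?thesis using A1 LE_trans by blast
      qed
      then show ?thesis using RA rA by blast
    qed
    show ?thesis using T0 LEWT Aex by blast
  qed
qed


lemma RR_F: "RR X \<Longrightarrow> Fprop X"
proof (induct rule: RR.induct)
  case (RR_zero X) then show ?case by (simp add: Fprop_def zero_sig_eq)
next
  case (RR_one X)
  have rX: "rho X = C [C []]" using RR_one by (simp add: one_sig_eq rho_one_sig ord_one_def)
  show ?case unfolding Fprop_def
  proof (intro allI impI)
    fix S assume fin: "finite S" and Sa: "\<forall>\<alpha>\<in>S. ord_valid \<alpha> \<and> ord_lt \<alpha> (rho X)" and X0: "0 < fst X"
    have z: "\<alpha> = ord_zero" if "\<alpha> \<in> S" for \<alpha>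
    proof -
      obtain as where a: "\<alpha> = C as" by (cases \<alpha>)
      have "ord_lt (C as) (C [C []])" using Sa that a rX by simp
      then obtain k where "k < 1" "length as = k \<or> (k < length as \<and> ord_lt (as ! k) ([C []] ! k))"
        using lex_elim by fastforce
      then have "as = []" by auto
      then show ?thesis using a by (simp add: ord_zero_def)
    qed
    have "LE (sig_plus sig_zero X) X" by (rule LE_eq, rule plus_zero_l) simp
    moreover have "\<forall>\<alpha>\<in>S. \<exists>A. RR A \<and> rho A = \<alpha> \<and> LE A sig_zero"
    proof
      fix \<alpha> assume "\<alpha> \<in> S"
      then have "\<alpha> = ord_zero" by (rule z)
      moreover have "RR sig_zero" by (rule RR.RR_zero) simp
      moreover have "rho sig_zero = ord_zero" by (rule rho_zero_sig) simp
      ultimately show "\<exists>A. RR A \<and> rho A = \<alpha> \<and> LE A sig_zero" by (intro exI[of _ sig_zero]) simp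
    qed
    ultimately show "\<exists>W T. 0 < fst T \<and> LE (sig_plus W T) X \<and> (\<forall>\<alpha>\<in>S. \<exists>A. RR A \<and> rho A = \<alpha> \<and> LE A W)"
      using X0 by blast
  qed
next
  case (RR_sum Xs X)
  define Ys where "Ys = filter (\<lambda>A. 0 < fst A) Xs"
  have Ys: "\<forall>Y\<in>set Ys. RR Y \<and> Fprop Y \<and> 0 < fst Y"
  proof
    fix Y assume "Y \<in> set Ys"
    then have "Y \<in> set Xs" "0 < fst Y" unfolding Ys_def by auto
    then show "RR Y \<and> Fprop Y \<and> 0 < fst Y" using RR_sum(1) by (auto simp: in_set_conv_nth)
  qed
  have s: "sorted_wrt RL Ys" unfolding Ys_def by (rule RR_sorted_filter[OF RR_sum(2)])
  have e: "sig_eq X (sig_sum (map sig_exp Ys))" unfolding Ys_def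
    using RR_sum(3) sig_sum_drop_zero sig_eq_trans by blast
  show ?case by (rule F_step[OF Ys s e])
qed

theorem lemma8p4:
  assumes "RR B" and "ord_valid \<alpha>" and "ord_lt \<alpha> (rho B)"
  shows "\<exists>A. RR A \<and> sig_le A B \<and> rho A = \<alpha>"
proof -
  have F: "Fprop B" using RR_F assms(1) by blast
  have B0: "0 < fst B"
  proof (rule ccontr)
    assume "\<not> 0 < fst B"
    then have "rho B = C []" using rho_zero_sig by (simp add: ord_zero_def)
    then show False using assms(3) by simp
  qed
  obtain W T where WT: "LE (sig_plus W T) B" and A: "\<exists>A. RR A \<and> rho A = \<alpha> \<and> LE A W"
    using F B0 assms(2,3) unfolding Fprop_def by (metis empty_iff finite.emptyI finite_insert insert_iff)
  obtain A where A1: "RR A" "rho A = \<alpha>" "LE A W" using A by blast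
  have "LE A B" using A1(3) LE_plus_left WT LE_trans by blast
  then have "sig_le A B" using LE_final B0 by blast
  then show ?thesis using A1 by blast
qed

end
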